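(* Let $\bullet\in\{0,L_p,L,1_p,1\}$ and let $\mathsf{S}$ be a $\bullet$-continuous kinematic system. Let $\mathbf{x}_0\in X\setminus\mathrm{int}(\mathcal{G}^\bullet_\mathsf{S})$. If $\mathbf{J}\in C^1_{\mathbf{x}_0}(X,\mathbb{R}^{m\times n})$ and $\mathsf{D}\mathbf{J}\in C^{L_p}_{\mathbf{x}_0}$, then there exist $a\in\{1,\dots,m\}$ and $r,L\in(0,\infty)$ such that (i) $c_{aa}(\mathbf{x}_0)=0$; (ii) $c_{aa}\hat{\mathbf{j}}_a^T\in C^{1_p}_{\mathbf{x}_0+rB_X}(X,\mathbb{R}^n)$; (iii) $\|\mathbf{h}(\mathbf{x})\|\le L\|\mathbf{x}-\mathbf{x}_0\|^2$ for all $\mathbf{x}\in\mathbf{x}_0+rB_X$, where $\mathbf{h}(\mathbf{x})=(c_{aa}\hat{\mathbf{j}}_a^T)(\mathbf{x})-\mathsf{D}(c_{aa}\hat{\mathbf{j}}_a^T)(\mathbf{x}_0)(\mathbf{x}-\mathbf{x}_0)$.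
   Context: Kinematic system: $l\ge2$, $m_1,\dots,m_l\ge1$, $m=\sum m_a\le n$; $X=\mathbb{R}\times\mathbb{R}^n$, $B_X$ its closed unit ball; $\mathbf{F}=[\mathbf{f}_t\ \mathbf{F}_q]:X\to\mathbb{R}^{m\times(n+1)}$, $\mathbf{R}:X\to$ invertible $n\times n$ matrices, $\mathbf{r}:X\to\mathbb{R}^m$; it is $\bullet$-continuous if $\mathbf{F},\mathbf{R},\mathbf{r}\in C^\bullet$ on $X$. $\mathbf{J}=\mathbf{F}_q\mathbf{R}^{-1}$. Orthogonalization: pointwise Gram–Schmidt on rows $\mathbf{j}_i$ of $\mathbf{J}$: $\mathbf{v}_i=\mathbf{j}_i-\sum_{k<i,c_{kk}>0}\langle\hat{\mathbf{j}}_k,\mathbf{j}_i\rangle\hat{\mathbf{j}}_k$, $c_{ii}=\|\mathbf{v}_i\|$, $\hat{\mathbf{j}}_i=\mathbf{v}_i/c_{ii}$ if $c_{ii}>0$, $c_{ik}=\langle\hat{\mathbf{j}}_k,\mathbf{j}_i\rangle$ for $k<i$ with $c_{kk}>0$, else $c_{ik}=0$; the other rows complete an orthonormal basis of the null space of $\mathbf{J}$ (note $c_{ii}\hat{\mathbf{j}}_i=\mathbf{v}_i$ regardless of these choices). $\mathbf{C}=[c_{ik}]_{i,k\le m}$, with diagonal blocks $\mathbf{C}_{aa}\in\mathbb{R}^{m_a\times m_a}$ (task blocks of sizes $m_1,\dots,m_l$), and $\hat{\mathbf{J}}_a$ the rows of $\hat{\mathbf{J}}_e$ with indices in the $a$-th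 task block. $\mathcal{G}^\bullet_\mathsf{S}=\{\mathbf{x}\in X:\mathbf{C}_{aa}\hat{\mathbf{J}}_a\in C^\bullet_\mathbf{x}\ \forall a\}$. Regularity classes: $f\in C^\bullet_{x_0}$ means ($0$) continuous at $x_0$; ($L_p$) $\exists r>0,L\ge0$: $\|f(x)-f(x_0)\|\le L\|x-x_0\|$ for $\|x-x_0\|\le r$; ($L$) Lipschitz near $x_0$; ($1_p$) Fréchet differentiable at $x_0$; ($1$) differentiable near $x_0$ with derivative continuous at $x_0$; $C^\bullet_\Omega$ = $\bullet$-continuous at every point of $\Omega$. $\mathsf{D}$ denotes the derivative. *)

theory Defs
  imports "HOL-Analysis.Analysis"
begin

datatype regclass = Reg0 | RegLp | RegL | Reg1p | Reg1

definition Dop :: "('a::real_normed_vector \<Rightarrow> 'b::real_normed_vector) \<Rightarrow> 'a \<Rightarrow> ('a \<Rightarrow>\<^sub>L 'b)" where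
  "Dop f x = Blinfun (frechet_derivative f (at x))"

fun reg_at :: "regclass \<Rightarrow> ('a::real_normed_vector \<Rightarrow> 'b::real_normed_vector) \<Rightarrow> 'a \<Rightarrow> bool" where
  "reg_at Reg0 f x0 = isCont f x0"
| "reg_at RegLp f x0 = (\<exists>r>0. \<exists>L\<ge>0. \<forall>x. norm (x - x0) \<le> r \<longrightarrow> norm (f x - f x0) \<le> L * norm (x - x0))"
| "reg_at RegL f x0 = (\<exists>r>0. \<exists>L. L-lipschitz_on (cball x0 r) f)"
| "reg_at Reg1p f x0 = (f differentiable (at x0))"
| "reg_at Reg1 f x0 = ((\<exists>r>0. \<forall>x\<in>ball x0 r. f differentiable (at x)) \<and> isCont (Dop f) x0)"

definition reg_on :: "regclass \<Rightarrow> ('a::real_normed_vector \<Rightarrow> 'b::real_normed_vector) \<Rightarrow> 'a set \<Rightarrow> bool" where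
  "reg_on b f S = (\<forall>x\<in>S. reg_at b f x)"

text \<open>X = R x R^n is the type real x real^n. Rows of m x (n+1) / m x n matrices
  are indexed by a finite linearly ordered type 'm (m = card of 'm); the order gives the row order.\<close>

type_synonym 'n state = "real \<times> (real^'n)"

definition kinematic_system ::
  "nat list \<Rightarrow> (('n::finite) state \<Rightarrow> ('n state)^('m::{finite,linorder})) \<Rightarrow> ('n state \<Rightarrow> real^'n^'n)
    \<Rightarrow> ('n state \<Rightarrow> real^('m::{finite,linorder})) \<Rightarrow> bool" where
  "kinematic_system ms F R r \<longleftrightarrow> length ms \<ge> 2 \<and> (\<forall>k\<in>set ms. k \<ge> 1) \<and>
     sum_list ms = CARD('m::{finite,linorder}) \<and> CARD('m::{finite,linorder}) \<le> CARD('n::finite) \<and> (\<forall>x. invertible (R x))"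

definition reg_system :: "regclass \<Rightarrow> (('n::finite) state \<Rightarrow> ('n state)^('m::{finite,linorder}))
    \<Rightarrow> ('n state \<Rightarrow> real^'n^'n) \<Rightarrow> ('n state \<Rightarrow> real^('m::{finite,linorder})) \<Rightarrow> bool" where
  "reg_system b F R r \<longleftrightarrow> reg_on b F UNIV \<and> reg_on b R UNIV \<and> reg_on b r UNIV"

text \<open>F_q: the last n columns of F; J = F_q R^{-1}.\<close>
definition Fq :: "(('n::finite) state)^('m::{finite,linorder}) \<Rightarrow> real^'n^('m::{finite,linorder})" where
  "Fq M = (\<chi> i. snd (M $ i))"

definition Jmat :: "(('n::finite) state \<Rightarrow> ('n state)^('m::{finite,linorder})) \<Rightarrow> ('n state \<Rightarrow> real^'n^'n) \<Rightarrow> 'n state \<Rightarrow> real^'n^('m::{finite,linorder})" where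
  "Jmat F R x = Fq (F x) ** matrix_inv (R x)"

text \<open>Processing the rows left to right; each step appends hat j_i = v_i / c_ii if c_ii > 0,
  and 0 otherwise (placeholder for the null-space completion, which never enters C_aa hat J_a).\<close>
definition gs_hats :: "('a::real_inner) list \<Rightarrow> 'a list" where
  "gs_hats js = foldl (\<lambda>hs j. hs @
     [let v = j - (\<Sum>h\<leftarrow>filter (\<lambda>h. h \<noteq> 0) hs. (h \<bullet> j) *\<^sub>R h)
      in if norm v > 0 then (1 / norm v) *\<^sub>R v else 0]) [] js"

definition row_pos :: "'m::{finite,linorder} \<Rightarrow> nat" where
  "row_pos i = card {k. k < i}"

definition rows :: "real^'n^('m::{finite,linorder}) \<Rightarrow> (real^'n) list" where
  "rows M = map (\<lambda>i. M $ i) (sorted_list_of_set (UNIV :: 'm::{finite,linorder} set))"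

definition gs_hat :: "real^'n^('m::{finite,linorder}) \<Rightarrow> 'm::{finite,linorder} \<Rightarrow> real^'n" where
  "gs_hat M i = gs_hats (rows M) ! row_pos i"

definition gs_v :: "real^'n^('m::{finite,linorder}) \<Rightarrow> 'm::{finite,linorder} \<Rightarrow> real^'n" where
  "gs_v M i = M $ i - (\<Sum>k\<in>{k. k < i \<and> gs_hat M k \<noteq> 0}. (gs_hat M k \<bullet> M $ i) *\<^sub>R gs_hat M k)"

definition gs_c :: "real^'n^('m::{finite,linorder}) \<Rightarrow> 'm::{finite,linorder} \<Rightarrow> 'm \<Rightarrow> real" where
  "gs_c M i k = (if k = i then norm (gs_v M i)
                 else if k < i \<and> norm (gs_v M k) > 0 then gs_hat M k \<bullet> M $ i else 0)"

text \<open>Block a (0-based, a < length ms) consists of rows with positions in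
  [m_1+...+m_a, m_1+...+m_{a+1}).\<close>
definition task_block :: "nat list \<Rightarrow> nat \<Rightarrow> 'm::{finite,linorder} set" where
  "task_block ms a = {i. sum_list (take a ms) \<le> row_pos i \<and> row_pos i < sum_list (take (Suc a) ms)}"

text \<open>C_aa hat J_a, embedded as an m x n matrix whose rows outside block a are zero.\<close>
definition block_mat :: "nat list \<Rightarrow> real^'n^('m::{finite,linorder}) \<Rightarrow> nat \<Rightarrow> real^'n^('m::{finite,linorder})" where
  "block_mat ms M a = (\<chi> i. if i \<in> task_block ms a
       then (\<Sum>k\<in>task_block ms a. gs_c M i k *\<^sub>R gs_hat M k) else 0)"

definition G_set :: "regclass \<Rightarrow> nat list \<Rightarrow> (('n::finite) state \<Rightarrow> ('n state)^('m::{finite,linorder}))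
    \<Rightarrow> ('n state \<Rightarrow> real^'n^'n) \<Rightarrow> 'n state set" where
  "G_set b ms F R = {x. \<forall>a < length ms. reg_at b (\<lambda>y. block_mat ms (Jmat F R y) a) x}"

end

theory Submission
  imports Defs
begin


definition LL :: "'a::metric_space set \<Rightarrow> ('a \<Rightarrow> 'b::metric_space) \<Rightarrow> bool" where
  "LL S f \<longleftrightarrow> (\<forall>x\<in>S. \<exists>r>0. \<exists>L. ball x r \<subseteq> S \<and> L-lipschitz_on (ball x r) f)"

lemma LL_open: "LL S f \<Longrightarrow> open S"
  unfolding LL_def open_contains_ball by blast

lemma LL_subset: "LL S f \<Longrightarrow> open T \<Longrightarrow> T \<subseteq> S \<Longrightarrow> LL T f"
  unfolding LL_def
proof safe
  fix x assume H: "\<forall>x\<in>S. \<exists>r>0. \<exists>L. ball x r \<subseteq> S \<and> L-lipschitz_on (ball x r) f" "open T" "T \<subseteq> S" "x \<in> T"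
  then obtain r L where r: "r>0" "L-lipschitz_on (ball x r) f" by blast
  obtain e where e: "e>0" "ball x e \<subseteq> T" using H open_contains_ball by blast
  show "\<exists>r>0. \<exists>L. ball x r \<subseteq> T \<and> L-lipschitz_on (ball x r) f"
    apply (rule exI[of _ "min r e"]) using r e
    by (auto intro!: exI[of _ L] lipschitz_on_subset[OF r(2)])
qed

lemma LL_cong: "LL S f \<Longrightarrow> (\<And>x. x \<in> S \<Longrightarrow> f x = g x) \<Longrightarrow> LL S g"
  unfolding LL_def
proof safe
  fix x assume H: "\<forall>x\<in>S. \<exists>r>0. \<exists>L. ball x r \<subseteq> S \<and> L-lipschitz_on (ball x r) f" "(\<And>x. x \<in> S \<Longrightarrow> f x = g x)" "x \<in> S"
  then obtain r L where r: "r>0" "ball x r \<subseteq> S" "L-lipschitz_on (ball x r) f" by blast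
  have eq: "\<And>y. y \<in> ball x r \<Longrightarrow> f y = g y" using r(2) H(2) by blast
  have "L-lipschitz_on (ball x r) g \<longleftrightarrow> L-lipschitz_on (ball x r) f"
    by (rule lipschitz_on_cong) (auto simp: eq)
  then have "L-lipschitz_on (ball x r) g" using r(3) by simp
  then show "\<exists>r>0. \<exists>L. ball x r \<subseteq> S \<and> L-lipschitz_on (ball x r) g" using r by blast
qed

lemma LL_isCont_aux: "L-lipschitz_on (ball x r) f \<Longrightarrow> r > 0 \<Longrightarrow> isCont f x"
proof -
  assume "L-lipschitz_on (ball x r) f" "r > 0"
  then have "continuous_on (ball x r) f" using lipschitz_on_continuous_on by blast
  then show ?thesis by (rule continuous_on_interior) (simp add: \<open>r>0\<close>)
qed

lemma LL_continuous_on: assumes A: "LL S f" shows "continuous_on S f"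
proof (rule continuous_at_imp_continuous_on, rule ballI)
  fix x assume x: "x \<in> S"
  have "\<exists>r L. r > 0 \<and> L-lipschitz_on (ball x r) f" using A x unfolding LL_def by blast
  then show "isCont f x" using LL_isCont_aux by blast
qed

lemma LL_const: "open S \<Longrightarrow> LL S (\<lambda>x. c)"
  unfolding LL_def open_contains_ball
proof safe
  fix x assume "\<forall>x\<in>S. \<exists>e>0. ball x e \<subseteq> S" "x \<in> S"
  then obtain e where "e>0" "ball x e \<subseteq> S" by blast
  then show "\<exists>r>0. \<exists>L. ball x r \<subseteq> S \<and> L-lipschitz_on (ball x r) (\<lambda>x. c)"
    using lipschitz_on_constant by blast
qed

lemma LL_bounded_linear: "open S \<Longrightarrow> bounded_linear h \<Longrightarrow> LL S h"
proof -
  assume S: "open S" and h: "bounded_linear h"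
  obtain K where K: "K>0" "\<And>x. norm (h x) \<le> norm x * K" using bounded_linear.pos_bounded[OF h] by blast
  have "K-lipschitz_on U h" for U
  proof (rule lipschitz_onI)
    fix x y show "dist (h x) (h y) \<le> K * dist x y"
      using K(2)[of "x - y"] by (simp add: dist_norm linear_simps(2)[OF h, symmetric] mult.commute)
  qed (use K in simp)
  then show ?thesis using S unfolding LL_def open_contains_ball by blast
qed

lemma LL_comp: "LL T f \<Longrightarrow> LL S g \<Longrightarrow> g ` S \<subseteq> T \<Longrightarrow> LL S (\<lambda>x. f (g x))"
  unfolding LL_def
proof safe
  fix x assume F: "\<forall>x\<in>T. \<exists>r>0. \<exists>L. ball x r \<subseteq> T \<and> L-lipschitz_on (ball x r) f"
    and G: "\<forall>x\<in>S. \<exists>r>0. \<exists>L. ball x r \<subseteq> S \<and> L-lipschitz_on (ball x r) g"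
    and sub: "g ` S \<subseteq> T" and x: "x \<in> S"
  obtain r2 L2 where r2: "r2>0" "ball x r2 \<subseteq> S" "L2-lipschitz_on (ball x r2) g" using G x by blast
  obtain r1 L1 where r1: "r1>0" "ball (g x) r1 \<subseteq> T" "L1-lipschitz_on (ball (g x) r1) f" using F x sub by blast
  have L2: "L2 \<ge> 0" using lipschitz_on_nonneg[OF r2(3)] .
  define r where "r = min r2 (r1 / (L2 + 1))"
  have rpos: "r > 0" using r1 r2 L2 by (auto simp: r_def)
  have sub2: "g ` ball x r \<subseteq> ball (g x) r1"
  proof
    fix y assume "y \<in> g ` ball x r"
    then obtain z where z: "z \<in> ball x r" "y = g z" by blast
    have zr2: "z \<in> ball x r2" using z r_def by auto
    have "dist (g x) (g z) \<le> L2 * dist x z" using lipschitz_onD[OF r2(3)] zr2 r2(1) by auto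
    also have "\<dots> \<le> L2 * r" using z L2 by (auto intro!: mult_left_mono)
    also have "\<dots> < r1"
    proof -
      have "L2 * r \<le> L2 * (r1/(L2+1))" by (rule mult_left_mono) (use L2 in \<open>auto simp: r_def\<close>)
      also have "\<dots> < r1" using L2 r1(1) by (simp add: field_simps)
      finally show ?thesis .
    qed
    finally show "y \<in> ball (g x) r1" using z by auto
  qed
  have "L2-lipschitz_on (ball x r) g" by (rule lipschitz_on_subset[OF r2(3)]) (auto simp: r_def)
  moreover have "L1-lipschitz_on (g ` ball x r) f" using lipschitz_on_subset[OF r1(3) sub2] .
  ultimately have "(L1*L2)-lipschitz_on (ball x r) (\<lambda>x. f (g x))" by (rule lipschitz_on_compose2)
  moreover have "ball x r \<subseteq> S" using r2 r_def by auto
  ultimately show "\<exists>r>0. \<exists>L. ball x r \<subseteq> S \<and> L-lipschitz_on (ball x r) (\<lambda>x. f (g x))"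
    using rpos by blast
qed



lemma LL_add: "LL S f \<Longrightarrow> LL S g \<Longrightarrow> LL S (\<lambda>x. f x + g x :: 'b::real_normed_vector)"
  unfolding LL_def
proof safe
  fix x assume F: "\<forall>x\<in>S. \<exists>r>0. \<exists>L. ball x r \<subseteq> S \<and> L-lipschitz_on (ball x r) f"
    and G: "\<forall>x\<in>S. \<exists>r>0. \<exists>L. ball x r \<subseteq> S \<and> L-lipschitz_on (ball x r) g" and x: "x \<in> S"
  obtain r1 L1 where r1: "r1>0" "ball x r1 \<subseteq> S" "L1-lipschitz_on (ball x r1) f" using F x by blast
  obtain r2 L2 where r2: "r2>0" "ball x r2 \<subseteq> S" "L2-lipschitz_on (ball x r2) g" using G x by blast
  have "(L1+L2)-lipschitz_on (ball x (min r1 r2)) (\<lambda>x. f x + g x)"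
    by (rule lipschitz_on_add; rule lipschitz_on_subset[OF r1(3)] lipschitz_on_subset[OF r2(3)]; auto)
  then show "\<exists>r>0. \<exists>L. ball x r \<subseteq> S \<and> L-lipschitz_on (ball x r) (\<lambda>x. f x + g x)"
    using r1 r2 by (intro exI[of _ "min r1 r2"]) auto
qed

lemma LL_uminus: "LL S f \<Longrightarrow> LL S (\<lambda>x. - f x :: 'b::real_normed_vector)"
  using LL_comp[OF LL_bounded_linear[OF open_UNIV bounded_linear_minus[OF bounded_linear_ident]], of S f]
  by auto

lemma LL_diff: "LL S f \<Longrightarrow> LL S g \<Longrightarrow> LL S (\<lambda>x. f x - g x :: 'b::real_normed_vector)"
  using LL_add[OF _ LL_uminus, of S f g] by simp

lemma LL_sum: "open S \<Longrightarrow> (\<And>i. i \<in> I \<Longrightarrow> LL S (f i)) \<Longrightarrow> LL S (\<lambda>x. \<Sum>i\<in>I. f i x :: 'b::real_normed_vector)"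
proof (induction I rule: infinite_finite_induct)
  case (infinite A) then show ?case by (simp add: LL_const)
next
  case empty then show ?case by (simp add: LL_const)
next
  case (insert i I) then show ?case by (simp add: LL_add)
qed

lemma LL_bilinear:
  assumes bb: "bounded_bilinear PP" and F: "LL S f" and G: "LL S g"
  shows "LL S (\<lambda>x. PP (f x) (g x))"
  unfolding LL_def
proof safe
  fix x assume x: "x \<in> S"
  obtain r1 L1 where r1: "r1>0" "ball x r1 \<subseteq> S" "L1-lipschitz_on (ball x r1) f" using F x unfolding LL_def by blast
  obtain r2 L2 where r2: "r2>0" "ball x r2 \<subseteq> S" "L2-lipschitz_on (ball x r2) g" using G x unfolding LL_def by blast
  obtain K where K: "K>0" "\<And>a b. norm (PP a b) \<le> norm a * norm b * K"
    using bounded_bilinear.pos_bounded[OF bb] by blast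
  have L1: "L1 \<ge> 0" using lipschitz_on_nonneg[OF r1(3)] .
  have L2: "L2 \<ge> 0" using lipschitz_on_nonneg[OF r2(3)] .
  define r where "r = min r1 r2"
  define Bf where "Bf = norm (f x) + L1 * r1"
  define Bg where "Bg = norm (g x) + L2 * r2"
  have bf: "norm (f y) \<le> Bf" if "y \<in> ball x r1" for y
  proof -
    have "dist (f x) (f y) \<le> L1 * dist x y" using lipschitz_onD[OF r1(3)] that r1(1) by auto
    also have "\<dots> \<le> L1 * r1" using that L1 by (auto intro!: mult_left_mono)
    finally show ?thesis unfolding Bf_def dist_norm using norm_triangle_ineq2[of "f y" "f x"] by (simp add: norm_minus_commute)
  qed
  have bg: "norm (g y) \<le> Bg" if "y \<in> ball x r2" for y
  proof -
    have "dist (g x) (g y) \<le> L2 * dist x y" using lipschitz_onD[OF r2(3)] that r2(1) by auto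
    also have "\<dots> \<le> L2 * r2" using that L2 by (auto intro!: mult_left_mono)
    finally show ?thesis unfolding Bg_def dist_norm using norm_triangle_ineq2[of "g y" "g x"] by (simp add: norm_minus_commute)
  qed
  have Bf0: "Bf \<ge> 0" unfolding Bf_def using L1 r1 by simp
  have Bg0: "Bg \<ge> 0" unfolding Bg_def using L2 r2 by simp
  have "(K * (L1 * Bg + Bf * L2))-lipschitz_on (ball x r) (\<lambda>x. PP (f x) (g x))"
  proof (rule lipschitz_onI)
    show "0 \<le> K * (L1 * Bg + Bf * L2)" using K L1 L2 Bf0 Bg0 by simp
    fix y z assume y: "y \<in> ball x r" and z: "z \<in> ball x r"
    have y1: "y \<in> ball x r1" and y2: "y \<in> ball x r2" and z1: "z \<in> ball x r1" and z2: "z \<in> ball x r2"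
      using y z r_def by auto
    have eq: "PP (f y) (g y) - PP (f z) (g z) = PP (f y - f z) (g y) + PP (f z) (g y - g z)"
      by (simp add: bounded_bilinear.diff_left[OF bb] bounded_bilinear.diff_right[OF bb])
    have "norm (PP (f y - f z) (g y)) \<le> norm (f y - f z) * norm (g y) * K" by (rule K)
    also have "\<dots> \<le> (L1 * dist y z) * Bg * K"
      using lipschitz_onD[OF r1(3) y1 z1] bg[OF y2] K(1) L1 
      by (intro mult_right_mono mult_mono) (auto simp: dist_norm)
    finally have A: "norm (PP (f y - f z) (g y)) \<le> (L1 * dist y z) * Bg * K" .
    have "norm (PP (f z) (g y - g z)) \<le> norm (f z) * norm (g y - g z) * K" by (rule K)
    also have "\<dots> \<le> Bf * (L2 * dist y z) * K"
      using lipschitz_onD[OF r2(3) y2 z2] bf[OF z1] K(1) L2 Bf0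
      by (intro mult_right_mono mult_mono) (auto simp: dist_norm)
    finally have B: "norm (PP (f z) (g y - g z)) \<le> Bf * (L2 * dist y z) * K" .
    have "dist (PP (f y) (g y)) (PP (f z) (g z)) \<le> norm (PP (f y - f z) (g y)) + norm (PP (f z) (g y - g z))"
      unfolding dist_norm eq by (rule norm_triangle_ineq)
    also have "\<dots> \<le> K * (L1 * Bg + Bf * L2) * dist y z" using A B by (simp add: algebra_simps)
    finally show "dist (PP (f y) (g y)) (PP (f z) (g z)) \<le> K * (L1 * Bg + Bf * L2) * dist y z" .
  qed
  moreover have "ball x r \<subseteq> S" "r > 0" using r1 r2 r_def by auto
  ultimately show "\<exists>r>0. \<exists>L. ball x r \<subseteq> S \<and> L-lipschitz_on (ball x r) (\<lambda>x. PP (f x) (g x))" by blast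
qed

lemma LL_inverse: "LL {t::real. t \<noteq> 0} inverse"
  unfolding LL_def
proof safe
  fix t :: real assume t: "t \<noteq> 0"
  define r where "r = \<bar>t\<bar>/2"
  have r: "r > 0" using t r_def by simp
  have lb: "\<bar>y\<bar> \<ge> r" if "y \<in> ball t r" for y
    using that unfolding r_def dist_real_def mem_ball by linarith
  have "(1/(r*r))-lipschitz_on (ball t r) inverse"
  proof (rule lipschitz_onI)
    show "0 \<le> 1/(r*r)" using r by simp
    fix y z assume y: "y \<in> ball t r" and z: "z \<in> ball t r"
    have y0: "y \<noteq> 0" and z0: "z \<noteq> 0" using lb[OF y] lb[OF z] r by auto
    have "dist (inverse y) (inverse z) = \<bar>z - y\<bar> / (\<bar>y\<bar> * \<bar>z\<bar>)"
      using y0 z0 by (simp add: dist_real_def inverse_eq_divide field_simps abs_divide abs_mult)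
    also have "\<dots> \<le> \<bar>z - y\<bar> / (r * r)"
      using lb[OF y] lb[OF z] r by (intro divide_left_mono mult_mono) auto
    also have "\<dots> = 1/(r*r) * dist y z" by (simp add: dist_real_def abs_minus_commute)
    finally show "dist (inverse y) (inverse z) \<le> 1/(r*r) * dist y z" .
  qed
  moreover have "ball t r \<subseteq> {t. t \<noteq> 0}"
  proof
    fix y assume "y \<in> ball t r" then have "r \<le> \<bar>y\<bar>" by (rule lb)
    then show "y \<in> {t. t \<noteq> 0}" using r by auto
  qed
  ultimately show "\<exists>r>0. \<exists>L. ball t r \<subseteq> {t. t \<noteq> 0} \<and> L-lipschitz_on (ball t r) inverse"
    using r by blast
qed

lemma LL_norm: "open S \<Longrightarrow> LL S norm"
  unfolding LL_def open_contains_ball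
proof safe
  fix x assume "\<forall>x\<in>S. \<exists>e>0. ball x e \<subseteq> S" "x \<in> S"
  then obtain e where "e>0" "ball x e \<subseteq> S" by blast
  moreover have "1-lipschitz_on (ball x e) norm"
    by (rule lipschitz_onI) (auto simp: dist_norm norm_triangle_ineq3)
  ultimately show "\<exists>r>0. \<exists>L. ball x r \<subseteq> S \<and> L-lipschitz_on (ball x r) norm" by blast
qed



definition C11 :: "'a::real_normed_vector set \<Rightarrow> ('a \<Rightarrow> 'b::real_normed_vector) \<Rightarrow> bool" where
  "C11 S f \<longleftrightarrow> (\<exists>D. (\<forall>x\<in>S. (f has_derivative blinfun_apply (D x)) (at x)) \<and> LL S D)"


lemma C11_open: "C11 S f \<Longrightarrow> open S"
  unfolding C11_def using LL_open by blast

lemma C11_LL: assumes "C11 S f" shows "LL S f"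
  unfolding LL_def
proof safe
  fix x assume x: "x \<in> S"
  obtain D where D: "\<And>x. x\<in>S \<Longrightarrow> (f has_derivative blinfun_apply (D x)) (at x)" "LL S D"
    using assms unfolding C11_def by blast
  obtain r L where r: "r>0" "ball x r \<subseteq> S" "L-lipschitz_on (ball x r) D" using D(2) x unfolding LL_def by blast
  have L: "L \<ge> 0" using lipschitz_on_nonneg[OF r(3)] .
  define B where "B = norm (D x) + L * r"
  have bd: "norm (D y) \<le> B" if "y \<in> ball x r" for y
  proof -
    have "dist (D x) (D y) \<le> L * dist x y" using lipschitz_onD[OF r(3)] that r(1) by auto
    also have "\<dots> \<le> L * r" using that L by (auto intro!: mult_left_mono)
    finally show ?thesis unfolding B_def dist_norm using norm_triangle_ineq2[of "D y" "D x"] by (simp add: norm_minus_commute)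
  qed
  have B0: "B \<ge> 0" using L r unfolding B_def by simp
  have "B-lipschitz_on (ball x r) f"
  proof (rule lipschitz_onI)
    fix y z assume y: "y \<in> ball x r" and z: "z \<in> ball x r"
    have "norm (f y - f z) \<le> B * norm (y - z)"
    proof (rule differentiable_bound[of "ball x r" f "\<lambda>y. blinfun_apply (D y)"])
      show "convex (ball x r)" by simp
      show "(f has_derivative blinfun_apply (D u)) (at u within ball x r)" if "u \<in> ball x r" for u
      proof -
        have "u \<in> S" using r(2) that by blast
        then show ?thesis using D(1) has_derivative_at_withinI by blast
      qed
      show "onorm (blinfun_apply (D u)) \<le> B" if "u \<in> ball x r" for u
        using bd[OF that] by (simp add: norm_blinfun.rep_eq)
    qed (use y z in auto)
    then show "dist (f y) (f z) \<le> B * dist y z" by (simp add: dist_norm)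
  qed (rule B0)
  then show "\<exists>r>0. \<exists>L. ball x r \<subseteq> S \<and> L-lipschitz_on (ball x r) f" using r by blast
qed

lemma C11_cont: "C11 S f \<Longrightarrow> continuous_on S f"
  using C11_LL LL_continuous_on by blast

lemma C11_cong: assumes "C11 S f" "\<And>x. x \<in> S \<Longrightarrow> f x = g x" shows "C11 S g"
proof -
  obtain D where D: "\<And>x. x\<in>S \<Longrightarrow> (f has_derivative blinfun_apply (D x)) (at x)" "LL S D"
    using assms unfolding C11_def by blast
  have "open S" using LL_open[OF D(2)] .
  have "(g has_derivative blinfun_apply (D x)) (at x)" if "x \<in> S" for x
    by (rule has_derivative_transform_within_open[OF D(1)[OF that] \<open>open S\<close> that assms(2)]) 
  then show ?thesis using D(2) unfolding C11_def by blast
qed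

lemma C11_subset: "C11 S f \<Longrightarrow> open T \<Longrightarrow> T \<subseteq> S \<Longrightarrow> C11 T f"
  unfolding C11_def using LL_subset by blast


lemma C11_const: fixes S :: "'a::real_normed_vector set" and c :: "'b::real_normed_vector"
  assumes "open S" shows "C11 S (\<lambda>x. c)"
proof -
  have d: "((\<lambda>x. c) has_derivative blinfun_apply (0::'a\<Rightarrow>\<^sub>L'b)) (at x)" for x :: 'a
    by (rule has_derivative_eq_rhs[OF has_derivative_const]) (simp add: fun_eq_iff)
  have l: "LL S (\<lambda>x. 0::'a\<Rightarrow>\<^sub>L'b)" by (rule LL_const[OF assms])
  show ?thesis unfolding C11_def
    apply (rule exI[where x="\<lambda>x. 0::'a\<Rightarrow>\<^sub>L'b"])
    using d l by simp
qed

lemma C11_bl: "open S \<Longrightarrow> bounded_linear h \<Longrightarrow> C11 S h"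
  unfolding C11_def
  by (intro exI[of _ "\<lambda>x. Blinfun h"]) (auto simp: LL_const bounded_linear_Blinfun_apply bounded_linear_imp_has_derivative)

lemma C11_comp:
  assumes F: "C11 T f" and G: "C11 S g" and sub: "g ` S \<subseteq> T"
  shows "C11 S (\<lambda>x. f (g x))"
proof -
  obtain Df where Df: "\<And>x. x\<in>T \<Longrightarrow> (f has_derivative blinfun_apply (Df x)) (at x)" "LL T Df"
    using F unfolding C11_def by blast
  obtain Dg where Dg: "\<And>x. x\<in>S \<Longrightarrow> (g has_derivative blinfun_apply (Dg x)) (at x)" "LL S Dg"
    using G unfolding C11_def by blast
  have "((\<lambda>x. f (g x)) has_derivative blinfun_apply (Df (g x) o\<^sub>L Dg x)) (at x)" if "x \<in> S" for x
  proof -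
    have gx: "g x \<in> T" using sub that by blast
    show ?thesis using diff_chain_at[OF Dg(1)[OF that] Df(1)[OF gx]] by (simp add: o_def blinfun_compose.rep_eq)
  qed
  moreover
  have l1: "LL S (\<lambda>x. Df (g x))" by (rule LL_comp[OF Df(2) C11_LL[OF G] sub])
  have "LL S (\<lambda>x. Df (g x) o\<^sub>L Dg x)"
    using LL_bilinear[OF bounded_bilinear_blinfun_compose l1 Dg(2)] .
  ultimately show ?thesis unfolding C11_def
    apply (intro exI[where x="\<lambda>x. Df (g x) o\<^sub>L Dg x"])
    by blast
qed

lemma C11_bilinear:
  assumes bb: "bounded_bilinear PP" and F: "C11 S f" and G: "C11 S g"
  shows "C11 S (\<lambda>x. PP (f x) (g x))"
proof -
  obtain Df where Df: "\<And>x. x\<in>S \<Longrightarrow> (f has_derivative blinfun_apply (Df x)) (at x)" "LL S Df"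
    using F unfolding C11_def by blast
  obtain Dg where Dg: "\<And>x. x\<in>S \<Longrightarrow> (g has_derivative blinfun_apply (Dg x)) (at x)" "LL S Dg"
    using G unfolding C11_def by blast
  have S: "open S" using LL_open[OF Df(2)] .
  let ?D = "\<lambda>x. (bounded_bilinear.prod_right PP (f x) o\<^sub>L Dg x) + (bounded_bilinear.prod_left PP (g x) o\<^sub>L Df x)"
  have "((\<lambda>x. PP (f x) (g x)) has_derivative blinfun_apply (?D x)) (at x)" if "x \<in> S" for x
    using bounded_bilinear.FDERIV[OF bb Df(1)[OF that] Dg(1)[OF that]]
    by (simp add: plus_blinfun.rep_eq bounded_bilinear.prod_right.rep_eq[OF bb] bounded_bilinear.prod_left.rep_eq[OF bb] add.commute)
  moreover
  have l1: "LL S (\<lambda>x. bounded_bilinear.prod_right PP (f x))"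
    by (rule LL_comp[OF LL_bounded_linear[OF open_UNIV bounded_bilinear.bounded_linear_prod_right[OF bb]] C11_LL[OF F]]) simp
  have l2: "LL S (\<lambda>x. bounded_bilinear.prod_left PP (g x))"
    by (rule LL_comp[OF LL_bounded_linear[OF open_UNIV bounded_bilinear.bounded_linear_prod_left[OF bb]] C11_LL[OF G]]) simp
  have l3: "LL S (\<lambda>x. bounded_bilinear.prod_right PP (f x) o\<^sub>L Dg x)"
    using LL_bilinear[OF bounded_bilinear_blinfun_compose l1 Dg(2)] .
  have l4: "LL S (\<lambda>x. bounded_bilinear.prod_left PP (g x) o\<^sub>L Df x)"
    using LL_bilinear[OF bounded_bilinear_blinfun_compose l2 Df(2)] .
  have "LL S ?D" using LL_add[OF l3 l4] .
  ultimately show ?thesis unfolding C11_def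
    apply (intro exI[where x="?D"])
    by blast
qed


lemma C11_add: assumes F: "C11 S f" and G: "C11 S g" shows "C11 S (\<lambda>x. f x + g x)"
proof -
  obtain Df where Df: "\<And>x. x\<in>S \<Longrightarrow> (f has_derivative blinfun_apply (Df x)) (at x)" "LL S Df"
    using F unfolding C11_def by blast
  obtain Dg where Dg: "\<And>x. x\<in>S \<Longrightarrow> (g has_derivative blinfun_apply (Dg x)) (at x)" "LL S Dg"
    using G unfolding C11_def by blast
  have "((\<lambda>x. f x + g x) has_derivative blinfun_apply (Df x + Dg x)) (at x)" if "x \<in> S" for x
    using has_derivative_add[OF Df(1)[OF that] Dg(1)[OF that]] by (simp add: plus_blinfun.rep_eq)
  moreover have "LL S (\<lambda>x. Df x + Dg x)" using LL_add[OF Df(2) Dg(2)] .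
  ultimately show ?thesis unfolding C11_def
    apply (intro exI[where x="\<lambda>x. Df x + Dg x"])
    by blast
qed

lemma C11_uminus: assumes F: "C11 S f" shows "C11 S (\<lambda>x. - f x)"
  using C11_comp[OF C11_bl[OF open_UNIV bounded_linear_minus[OF bounded_linear_ident]] F] by simp

lemma C11_diff: "C11 S f \<Longrightarrow> C11 S g \<Longrightarrow> C11 S (\<lambda>x. f x - g x)"
  using C11_add[OF _ C11_uminus, of S f g] by simp

lemma C11_sum: "open S \<Longrightarrow> (\<And>i. i \<in> I \<Longrightarrow> C11 S (f i)) \<Longrightarrow> C11 S (\<lambda>x. \<Sum>i\<in>I. f i x)"
proof (induction I rule: infinite_finite_induct)
  case (infinite A) then show ?case by (simp add: C11_const)
next
  case empty then show ?case by (simp add: C11_const)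
next
  case (insert i I) then show ?case by (simp add: C11_add)
qed

lemma C11_id: "open S \<Longrightarrow> C11 S (\<lambda>x. x)"
  by (rule C11_bl[OF _ bounded_linear_ident])

lemma C11_inverse: "C11 {t::real. t \<noteq> 0} inverse"
proof -
  have "(inverse has_derivative blinfun_apply (blinfun_mult_right (- (inverse t * inverse t)))) (at t)" if "t \<noteq> 0" for t :: real
    using DERIV_inverse[OF that] by (simp add: has_field_derivative_def power2_eq_square mult.commute)
  moreover
  have l1: "LL {t::real. t \<noteq> 0} (\<lambda>t. inverse t * inverse t)"
    using LL_bilinear[OF bounded_bilinear_mult LL_inverse LL_inverse] .
  have l2: "LL {t::real. t \<noteq> 0} (\<lambda>t. - (inverse t * inverse t))" using LL_uminus[OF l1] .
  have "LL {t::real. t \<noteq> 0} (\<lambda>t. blinfun_mult_right (- (inverse t * inverse t)))"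
    by (rule LL_comp[OF LL_bounded_linear[OF open_UNIV bounded_linear_blinfun_mult_right] l2]) simp
  ultimately show ?thesis unfolding C11_def
    apply (intro exI[where x="\<lambda>t. blinfun_mult_right (- (inverse t * inverse t))"])
    by blast
qed

lemma C11_norm: "C11 {v::'a::real_inner. v \<noteq> 0} norm"
proof -
  have op: "open {v::'a. v \<noteq> 0}" by (simp add: open_Collect_neq)
  have "(norm has_derivative blinfun_apply (blinfun_inner_left (inverse (norm v) *\<^sub>R v))) (at v)" if "v \<noteq> 0" for v :: 'a
    using has_derivative_norm[OF that] by (simp add: sgn_div_norm)
  moreover
  have l1: "LL {v::'a. v \<noteq> 0} (\<lambda>v. inverse (norm v))"
    by (rule LL_comp[OF LL_inverse LL_norm[OF op]]) auto
  have l2: "LL {v::'a. v \<noteq> 0} (\<lambda>v. v)" by (rule LL_bounded_linear[OF op bounded_linear_ident])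
  have l3: "LL {v::'a. v \<noteq> 0} (\<lambda>v. inverse (norm v) *\<^sub>R v)"
    using LL_bilinear[OF bounded_bilinear_scaleR l1 l2] .
  have "LL {v::'a. v \<noteq> 0} (\<lambda>v. blinfun_inner_left (inverse (norm v) *\<^sub>R v))"
    by (rule LL_comp[OF LL_bounded_linear[OF open_UNIV bounded_linear_blinfun_inner_left] l3]) simp
  ultimately show ?thesis unfolding C11_def
    apply (intro exI[where x="\<lambda>v. blinfun_inner_left (inverse (norm v) *\<^sub>R v)"])
    by blast
qed

lemma C11_normalize: "C11 {v::'a::real_inner. v \<noteq> 0} (\<lambda>v. inverse (norm v) *\<^sub>R v)"
proof -
  have l1: "C11 {v::'a. v \<noteq> 0} (\<lambda>v. inverse (norm v))"
    by (rule C11_comp[OF C11_inverse C11_norm]) auto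
  have l2: "C11 {v::'a. v \<noteq> 0} (\<lambda>v. v)" by (rule C11_id) (simp add: open_Collect_neq)
  show ?thesis using C11_bilinear[OF bounded_bilinear_scaleR l1 l2] .
qed



definition vemb :: "'k::finite \<Rightarrow> 'b::real_normed_vector \<Rightarrow> 'b^'k" where
  "vemb i v = (\<chi> j. if j = i then v else 0)"

lemma bounded_linear_vemb: "bounded_linear (vemb (i::'k::finite) :: 'b::real_normed_vector \<Rightarrow> 'b^'k)"
proof (rule bounded_linear_intro[where K=1])
  fix x y :: 'b and r :: real
  show "vemb i (x + y) = vemb i x + vemb i y" by (simp add: vemb_def vec_eq_iff)
  show "vemb i (r *\<^sub>R x) = r *\<^sub>R vemb i x" by (simp add: vemb_def vec_eq_iff)
  have "norm (vemb i x) = L2_set (\<lambda>j. norm ((vemb i x) $ j)) UNIV" by (simp add: norm_vec_def)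
  also have "\<dots> \<le> (\<Sum>j\<in>UNIV. norm ((vemb i x) $ j))" by (rule L2_set_le_sum) simp
  also have "\<dots> = (\<Sum>j\<in>UNIV. if j = i then norm x else 0)" by (rule sum.cong) (auto simp: vemb_def)
  also have "\<dots> = norm x" by simp
  finally show "norm (vemb i x) \<le> norm x * 1" by simp
qed

lemma vec_as_sum: "(v::'b::real_normed_vector^'k::finite) = (\<Sum>i\<in>UNIV. vemb i (v $ i))"
  by (simp add: vec_eq_iff vemb_def if_distrib cong: if_cong)

lemma C11_vec:
  fixes f :: "'a::real_normed_vector \<Rightarrow> 'b::real_normed_vector^'k::finite"
  assumes S: "open S" and C: "\<And>i. C11 S (\<lambda>x. f x $ i)"
  shows "C11 S f"
proof -
  have "C11 S (\<lambda>x. \<Sum>i\<in>UNIV. vemb i (f x $ i))"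
  proof (rule C11_sum[OF S])
    fix i :: 'k
    show "C11 S (\<lambda>x. vemb i (f x $ i))"
      by (rule C11_comp[OF C11_bl[OF open_UNIV bounded_linear_vemb] C]) simp
  qed
  then show ?thesis by (rule C11_cong) (simp add: vec_as_sum[symmetric])
qed

lemma C11_nth: "C11 S f \<Longrightarrow> C11 S (\<lambda>x. f x $ i)"
  by (rule C11_comp[OF C11_bl[OF open_UNIV bounded_linear_vec_nth]]) simp_all

lemma C11_mult: "C11 S f \<Longrightarrow> C11 S g \<Longrightarrow> C11 S (\<lambda>x. f x * g x :: real)"
  by (rule C11_bilinear[OF bounded_bilinear_mult])

lemma C11_scaleR: "C11 S f \<Longrightarrow> C11 S g \<Longrightarrow> C11 S (\<lambda>x. f x *\<^sub>R g x)"
  by (rule C11_bilinear[OF bounded_bilinear_scaleR])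

lemma C11_inner: "C11 S f \<Longrightarrow> C11 S g \<Longrightarrow> C11 S (\<lambda>x. f x \<bullet> g x)"
  by (rule C11_bilinear[OF bounded_bilinear_inner])

lemma C11_prod: "open S \<Longrightarrow> (\<And>i. i \<in> I \<Longrightarrow> C11 S (f i)) \<Longrightarrow> C11 S (\<lambda>x. \<Prod>i\<in>I. f i x :: real)"
proof (induction I rule: infinite_finite_induct)
  case (infinite A) then show ?case by (simp add: C11_const)
next
  case empty then show ?case by (simp add: C11_const)
next
  case (insert i I) then show ?case by (simp add: C11_mult)
qed

lemma C11_det: "C11 (UNIV :: (real^'n::finite^'n) set) det"
proof -
  have "C11 UNIV (\<lambda>A::real^'n^'n. \<Sum>p\<in>{p. p permutes (UNIV::'n set)}. of_int (sign p) * (\<Prod>i\<in>UNIV. A$i$p i))"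
  proof (rule C11_sum[OF open_UNIV])
    fix p :: "'n \<Rightarrow> 'n"
    have "C11 UNIV (\<lambda>A::real^'n^'n. \<Prod>i\<in>UNIV. A$i$p i)"
    proof (rule C11_prod[OF open_UNIV])
      fix i show "C11 UNIV (\<lambda>A::real^'n^'n. A$i$p i)"
        by (rule C11_nth, rule C11_nth, rule C11_id[OF open_UNIV])
    qed
    then show "C11 UNIV (\<lambda>A::real^'n^'n. of_int (sign p) * (\<Prod>i\<in>UNIV. A$i$p i))"
      by (rule C11_mult[OF C11_const[OF open_UNIV]])
  qed
  then show ?thesis by (rule C11_cong) (simp add: det_def)
qed

lemma C11_matmul:
  fixes f :: "'a::real_normed_vector \<Rightarrow> real^'n::finite^'m::finite" and g :: "'a \<Rightarrow> real^'p::finite^'n"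
  assumes F: "C11 S f" and G: "C11 S g"
  shows "C11 S (\<lambda>x. f x ** g x)"
proof -
  have S: "open S" using C11_open[OF F] .
  show ?thesis
  proof (rule C11_vec[OF S], rule C11_vec[OF S])
    fix i j
    have "C11 S (\<lambda>x. \<Sum>k\<in>UNIV. f x $ i $ k * g x $ k $ j)"
      by (rule C11_sum[OF S], rule C11_mult; rule C11_nth, rule C11_nth) (simp_all add: F G)
    then show "C11 S (\<lambda>x. (f x ** g x) $ i $ j)"
      by (rule C11_cong) (simp add: matrix_matrix_mult_def)
  qed
qed

lemma matrix_inv_right: "invertible (A::real^'n::finite^'n) \<Longrightarrow> A ** matrix_inv A = mat 1"
  unfolding invertible_def matrix_inv_def by (rule someI2_ex) auto

lemma matrix_inv_entry:
  fixes A :: "real^'n::finite^'n"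
  assumes inv: "invertible A"
  shows "matrix_inv A $ k $ j = det (\<chi> i l. if l = k then axis j 1 $ i else A $ i $ l) / det A"
proof -
  have d0: "det A \<noteq> 0" using inv invertible_det_nz by blast
  have "A *v (matrix_inv A *v axis j 1) = axis j 1"
    by (simp add: matrix_vector_mul_assoc matrix_inv_right[OF inv])
  then have "matrix_inv A *v axis j 1 = (\<chi> k. det (\<chi> i l. if l = k then axis j 1 $ i else A $ i $ l) / det A)"
    using cramer[OF d0] by blast
  then have "(matrix_inv A *v axis j 1) $ k = det (\<chi> i l. if l = k then axis j 1 $ i else A $ i $ l) / det A"
    by simp
  then show ?thesis by (simp add: matrix_vector_mult_basis column_def)
qed

lemma open_invertible: "open {A::real^'n::finite^'n. invertible A}"
proof -
  have "open (UNIV \<inter> det -` (- {0::real}))"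
    by (rule continuous_open_preimage[OF C11_cont[OF C11_det]]) auto
  moreover have "{A::real^'n^'n. invertible A} = UNIV \<inter> det -` (- {0::real})"
    by (auto simp: invertible_det_nz)
  ultimately show ?thesis by simp
qed

lemma C11_matrix_inv: "C11 {A::real^'n::finite^'n. invertible A} matrix_inv"
proof -
  let ?S = "{A::real^'n::finite^'n. invertible A}"
  have S: "open ?S" by (rule open_invertible)
  have detS: "C11 ?S (det :: real^'n^'n \<Rightarrow> real)" by (rule C11_subset[OF C11_det S]) simp
  have idet: "C11 ?S (\<lambda>A::real^'n^'n. inverse (det A))"
    by (rule C11_comp[OF C11_inverse detS]) (auto simp: invertible_det_nz)
  have "C11 ?S (\<lambda>A. \<chi> k j. det (\<chi> i l. if l = k then axis j 1 $ i else A $ i $ l) * inverse (det A))"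
  proof (rule C11_vec[OF S], rule C11_vec[OF S])
    fix k j :: 'n
    have aff: "C11 ?S (\<lambda>A::real^'n^'n. (\<chi> i l. if l = k then axis j 1 $ i else A $ i $ l))"
    proof (rule C11_vec[OF S], rule C11_vec[OF S])
      fix i l :: 'n
      show "C11 ?S (\<lambda>A::real^'n^'n. (\<chi> i l. if l = k then axis j 1 $ i else A $ i $ l) $ i $ l)"
      proof (cases "l = k")
        case True then show ?thesis by (simp add: C11_const[OF S])
      next
        case False then show ?thesis
          by simp (rule C11_nth, rule C11_nth, rule C11_id[OF S])
      qed
    qed
    have "C11 ?S (\<lambda>A::real^'n^'n. det (\<chi> i l. if l = k then axis j 1 $ i else A $ i $ l))"
      by (rule C11_comp[OF C11_det aff]) simp
    then have "C11 ?S (\<lambda>A::real^'n^'n. det (\<chi> i l. if l = k then axis j 1 $ i else A $ i $ l) * inverse (det A))"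
      using idet by (rule C11_mult)
    then show "C11 ?S (\<lambda>A::real^'n^'n. (\<chi> k j. det (\<chi> i l. if l = k then axis j 1 $ i else A $ i $ l) * inverse (det A)) $ k $ j)"
      by simp
  qed
  then show ?thesis
    by (rule C11_cong) (simp add: vec_eq_iff matrix_inv_entry divide_inverse)
qed


lemma Dop_eq: "(f has_derivative blinfun_apply B) (at x) \<Longrightarrow> Dop f x = B"
  unfolding Dop_def by (metis frechet_derivative_at blinfun_apply_inverse)

lemma Dop_works: "f differentiable (at x) \<Longrightarrow> (f has_derivative blinfun_apply (Dop f x)) (at x)"
proof -
  assume "f differentiable (at x)"
  then have d: "(f has_derivative frechet_derivative f (at x)) (at x)" using frechet_derivative_works by blast
  then have "bounded_linear (frechet_derivative f (at x))" using has_derivative_bounded_linear by blast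
  then show ?thesis using d unfolding Dop_def by (simp add: bounded_linear_Blinfun_apply)
qed

lemma C11_D:
  assumes "C11 S f"
  obtains D where "\<And>x. x\<in>S \<Longrightarrow> (f has_derivative blinfun_apply (D x)) (at x)" "LL S D"
  using assms unfolding C11_def by blast

lemma LL_local:
  assumes "LL S f" "x \<in> S"
  obtains r L where "r > 0" "ball x r \<subseteq> S" "L-lipschitz_on (ball x r) f"
  using assms unfolding LL_def by blast

lemma isCont_near:
  assumes "isCont g y" "e > 0"
  obtains d where "d > 0" "\<And>x. dist x y < d \<Longrightarrow> g x \<in> ball (g y) e"
proof -
  obtain d where "d > 0" "\<And>x. dist x y < d \<Longrightarrow> dist (g x) (g y) < e"
    using assms unfolding continuous_at_eps_delta by blast
  then show ?thesis using that by (auto simp: dist_commute)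
qed

lemma reg_at_isCont: "reg_at b g y \<Longrightarrow> isCont g y"
proof (cases b)
  case Reg0 then show "reg_at b g y \<Longrightarrow> isCont g y" by simp
next
  case RegLp
  assume "reg_at b g y"
  then obtain r L where r: "r > 0" "L \<ge> 0" "\<And>x. norm (x - y) \<le> r \<Longrightarrow> norm (g x - g y) \<le> L * norm (x - y)"
    using RegLp by auto
  show "isCont g y" unfolding continuous_at_eps_delta
  proof (intro allI impI)
    fix e :: real assume e: "e > 0"
    define d where "d = min r (e / (L + 1))"
    have d: "d > 0" using r e by (simp add: d_def)
    have "dist (g x) (g y) < e" if "dist x y < d" for x
    proof -
      have "norm (x - y) \<le> r" using that by (simp add: d_def dist_norm)
      then have "norm (g x - g y) \<le> L * norm (x - y)" by (rule r(3))
      also have "\<dots> \<le> L * d" using that r(2) by (intro mult_left_mono) (auto simp: dist_norm)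
      also have "\<dots> \<le> L * (e / (L + 1))" using r(2) by (intro mult_left_mono) (auto simp: d_def)
      also have "\<dots> < e" using r(2) e by (simp add: field_simps)
      finally show ?thesis by (simp add: dist_norm)
    qed
    then show "\<exists>d>0. \<forall>x'. dist x' y < d \<longrightarrow> dist (g x') (g y) < e" using d by blast
  qed
next
  case RegL
  assume "reg_at b g y"
  then obtain r L where r: "r > 0" "L-lipschitz_on (cball y r) g" using RegL by auto
  have "continuous_on (cball y r) g" by (rule lipschitz_on_continuous_on[OF r(2)])
  then have "continuous_on (ball y r) g" by (rule continuous_on_subset) auto
  then show "isCont g y" by (rule continuous_on_interior) (simp add: r(1) interior_open)
next
  case Reg1p
  then show "reg_at b g y \<Longrightarrow> isCont g y" by (simp add: differentiable_imp_continuous_within)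
next
  case Reg1
  assume "reg_at b g y"
  then obtain r where "r > 0" "\<And>x. x \<in> ball y r \<Longrightarrow> g differentiable (at x)" using Reg1 by auto
  then have "g differentiable (at y)" by simp
  then show "isCont g y" by (simp add: differentiable_imp_continuous_within)
qed

lemma reg_at_comp:
  assumes C: "C11 S \<Psi>" and g: "reg_at b g y" and gy: "g y \<in> S"
  shows "reg_at b (\<lambda>x. \<Psi> (g x)) y"
proof -
  have S: "open S" using C11_open[OF C] .
  have gc: "isCont g y" using reg_at_isCont[OF g] .
  obtain D where D: "\<And>x. x\<in>S \<Longrightarrow> (\<Psi> has_derivative blinfun_apply (D x)) (at x)" "LL S D"
    using C11_D[OF C] by blast
  obtain r1 L1 where r1: "r1 > 0" "ball (g y) r1 \<subseteq> S" "L1-lipschitz_on (ball (g y) r1) \<Psi>"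
    using LL_local[OF C11_LL[OF C] gy] by blast
  have L1: "L1 \<ge> 0" using lipschitz_on_nonneg[OF r1(3)] .
  obtain d where d: "d > 0" "\<And>x. dist x y < d \<Longrightarrow> g x \<in> ball (g y) r1"
    using isCont_near[OF gc r1(1)] by blast
  have gyb: "g y \<in> ball (g y) r1" using r1 by simp
  show ?thesis
  proof (cases b)
    case Reg0
    have "isCont \<Psi> (g y)"
      using C11_cont[OF C] S gy continuous_on_eq_continuous_at by blast
    then show ?thesis using Reg0 gc by (simp add: isCont_o2)
  next
    case RegLp
    then obtain r L where r: "r > 0" "L \<ge> 0" "\<And>x. norm (x - y) \<le> r \<Longrightarrow> norm (g x - g y) \<le> L * norm (x - y)"
      using g by auto
    define r' where "r' = min r (d/2)"
    have r': "r' > 0" using r d by (simp add: r'_def)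
    have "norm (\<Psi> (g x) - \<Psi> (g y)) \<le> (L1 * L) * norm (x - y)" if x: "norm (x - y) \<le> r'" for x
    proof -
      have xr: "norm (x - y) \<le> r" using x by (simp add: r'_def)
      have "dist x y < d" using x d by (simp add: r'_def dist_norm)
      then have gx: "g x \<in> ball (g y) r1" by (rule d(2))
      have "norm (\<Psi> (g x) - \<Psi> (g y)) \<le> L1 * norm (g x - g y)"
        using lipschitz_onD[OF r1(3) gx gyb] by (simp add: dist_norm)
      also have "\<dots> \<le> L1 * (L * norm (x - y))" using r(3)[OF xr] L1 by (rule mult_left_mono)
      finally show ?thesis by simp
    qed
    then show ?thesis using RegLp apply simp
      apply (rule exI[where x=r'], rule conjI, rule r')
      apply (rule exI[where x="L1 * L"]) using L1 r(2) by auto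
  next
    case RegL
    then obtain r L where r: "r > 0" "L-lipschitz_on (cball y r) g" using g by auto
    define r' where "r' = min r (d/2)"
    have r': "r' > 0" using r d by (simp add: r'_def)
    have l1: "L-lipschitz_on (cball y r') g" by (rule lipschitz_on_subset[OF r(2)]) (auto simp: r'_def)
    have sub: "g ` cball y r' \<subseteq> ball (g y) r1"
    proof
      fix z assume "z \<in> g ` cball y r'"
      then obtain x where x: "x \<in> cball y r'" "z = g x" by blast
      have "dist x y < d" using x(1) d by (simp add: r'_def dist_commute)
      then show "z \<in> ball (g y) r1" using d(2) x(2) by blast
    qed
    have l2: "L1-lipschitz_on (g ` cball y r') \<Psi>" by (rule lipschitz_on_subset[OF r1(3) sub])
    have "(L1 * L)-lipschitz_on (cball y r') (\<lambda>x. \<Psi> (g x))" by (rule lipschitz_on_compose2[OF l1 l2])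
    then show ?thesis using RegL r' by auto
  next
    case Reg1p
    then have "g differentiable (at y)" using g by simp
    moreover have "\<Psi> differentiable (at (g y))" using D(1)[OF gy] unfolding differentiable_def by blast
    ultimately have "(\<Psi> \<circ> g) differentiable (at y)" by (rule differentiable_chain_at)
    then show ?thesis using Reg1p by (simp add: o_def)
  next
    case Reg1
    then obtain r where r: "r > 0" "\<And>x. x \<in> ball y r \<Longrightarrow> g differentiable (at x)" "isCont (Dop g) y"
      using g by auto
    define \<rho> where "\<rho> = min r d"
    have \<rho>: "\<rho> > 0" using r d by (simp add: \<rho>_def)
    have der: "((\<lambda>x. \<Psi> (g x)) has_derivative blinfun_apply (D (g z) o\<^sub>L Dop g z)) (at z)" if z: "z \<in> ball y \<rho>" for z
    proof -
      have gz: "g z \<in> S" using d(2)[of z] z r1(2) by (auto simp: \<rho>_def dist_commute)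
      have dz: "g differentiable (at z)" using r(2) z by (simp add: \<rho>_def)
      show ?thesis using diff_chain_at[OF Dop_works[OF dz] D(1)[OF gz]]
        by (simp add: o_def blinfun_compose.rep_eq)
    qed
    have diff: "(\<lambda>x. \<Psi> (g x)) differentiable (at z)" if "z \<in> ball y \<rho>" for z
      using der[OF that] unfolding differentiable_def by blast
    have "\<forall>z\<in>ball y \<rho>. Dop (\<lambda>x. \<Psi> (g x)) z = D (g z) o\<^sub>L Dop g z"
      using Dop_eq[OF der] by blast
    then have ev: "eventually (\<lambda>z. Dop (\<lambda>x. \<Psi> (g x)) z = D (g z) o\<^sub>L Dop g z) (nhds y)"
      unfolding eventually_nhds using \<rho> by (intro exI[of _ "ball y \<rho>"]) auto
    have cD: "isCont D (g y)"
      using LL_continuous_on[OF D(2)] S gy continuous_on_eq_continuous_at by blast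
    have "isCont (\<lambda>z. D (g z)) y" using isCont_o2[OF gc cD] .
    then have "isCont (\<lambda>z. D (g z) o\<^sub>L Dop g z) y"
      using bounded_bilinear.isCont[OF bounded_bilinear_blinfun_compose _ r(3)] by blast
    then have "isCont (Dop (\<lambda>x. \<Psi> (g x))) y" using isCont_cong[OF ev] by blast
    then show ?thesis using Reg1 \<rho> diff by auto
  qed
qed

lemma reg_at_pair:
  fixes f :: "'a::real_normed_vector \<Rightarrow> 'b::real_normed_vector" and g :: "'a \<Rightarrow> 'c::real_normed_vector"
  assumes f: "reg_at b f y" and g: "reg_at b g y"
  shows "reg_at b (\<lambda>x. (f x, g x)) y"
proof (cases b)
  case Reg0 then show ?thesis using f g by simp
next
  case RegLp
  obtain r1 L1 where r1: "r1 > 0" "L1 \<ge> 0" "\<And>x. norm (x - y) \<le> r1 \<Longrightarrow> norm (f x - f y) \<le> L1 * norm (x - y)"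
    using f RegLp by auto
  obtain r2 L2 where r2: "r2 > 0" "L2 \<ge> 0" "\<And>x. norm (x - y) \<le> r2 \<Longrightarrow> norm (g x - g y) \<le> L2 * norm (x - y)"
    using g RegLp by auto
  have "norm ((f x, g x) - (f y, g y)) \<le> (L1 + L2) * norm (x - y)" if "norm (x - y) \<le> min r1 r2" for x
  proof -
    have "norm ((f x, g x) - (f y, g y)) \<le> norm (f x - f y) + norm (g x - g y)"
      using norm_Pair_le[of "f x - f y" "g x - g y"] by simp
    also have "\<dots> \<le> L1 * norm (x - y) + L2 * norm (x - y)"
      using r1(3)[of x] r2(3)[of x] that by simp
    finally show ?thesis by (simp add: algebra_simps)
  qed
  then show ?thesis using RegLp apply simp
    apply (rule exI[where x="min r1 r2"], rule conjI) using r1(1) r2(1) apply simp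
    apply (rule exI[where x="L1 + L2"]) using r1(2) r2(2) by auto
next
  case RegL
  obtain r1 L1 where r1: "r1 > 0" "L1-lipschitz_on (cball y r1) f" using f RegL by auto
  obtain r2 L2 where r2: "r2 > 0" "L2-lipschitz_on (cball y r2) g" using g RegL by auto
  have "(sqrt (L1\<^sup>2 + L2\<^sup>2))-lipschitz_on (cball y (min r1 r2)) (\<lambda>x. (f x, g x))"
    by (rule lipschitz_on_Pair; rule lipschitz_on_subset[OF r1(2)] lipschitz_on_subset[OF r2(2)]) auto
  then show ?thesis using RegL apply simp
    apply (rule exI[where x="min r1 r2"], rule conjI) using r1(1) r2(1) apply simp
    by (rule exI[where x="sqrt (L1\<^sup>2 + L2\<^sup>2)"])
next
  case Reg1p then show ?thesis using f g
    by (auto simp: differentiable_def intro: has_derivative_Pair)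
next
  case Reg1
  obtain r1 where r1: "r1 > 0" "\<And>x. x \<in> ball y r1 \<Longrightarrow> f differentiable (at x)" "isCont (Dop f) y"
    using f Reg1 by auto
  obtain r2 where r2: "r2 > 0" "\<And>x. x \<in> ball y r2 \<Longrightarrow> g differentiable (at x)" "isCont (Dop g) y"
    using g Reg1 by auto
  define eL where "eL = (Blinfun (\<lambda>a. (a, 0)) :: 'b \<Rightarrow>\<^sub>L ('b \<times> 'c))"
  define eR where "eR = (Blinfun (\<lambda>a. (0, a)) :: 'c \<Rightarrow>\<^sub>L ('b \<times> 'c))"
  have beL: "blinfun_apply eL = (\<lambda>a. (a, 0))" unfolding eL_def
    by (rule bounded_linear_Blinfun_apply, rule bounded_linear_Pair[OF bounded_linear_ident bounded_linear_zero])
  have beR: "blinfun_apply eR = (\<lambda>a. (0, a))" unfolding eR_def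
    by (rule bounded_linear_Blinfun_apply, rule bounded_linear_Pair[OF bounded_linear_zero bounded_linear_ident])
  define \<rho> where "\<rho> = min r1 r2"
  have \<rho>: "\<rho> > 0" using r1 r2 by (simp add: \<rho>_def)
  have der: "((\<lambda>x. (f x, g x)) has_derivative blinfun_apply ((eL o\<^sub>L Dop f z) + (eR o\<^sub>L Dop g z))) (at z)"
    if z: "z \<in> ball y \<rho>" for z
  proof -
    have "f differentiable (at z)" "g differentiable (at z)" using r1(2) r2(2) z by (auto simp: \<rho>_def)
    then have "((\<lambda>x. (f x, g x)) has_derivative (\<lambda>h. (Dop f z h, Dop g z h))) (at z)"
      by (intro has_derivative_Pair Dop_works)
    then show ?thesis by (simp add: plus_blinfun.rep_eq blinfun_compose.rep_eq beL beR o_def)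
  qed
  have diff: "(\<lambda>x. (f x, g x)) differentiable (at z)" if "z \<in> ball y \<rho>" for z
    using der[OF that] unfolding differentiable_def by blast
  have "\<forall>z\<in>ball y \<rho>. Dop (\<lambda>x. (f x, g x)) z = (eL o\<^sub>L Dop f z) + (eR o\<^sub>L Dop g z)"
    using Dop_eq[OF der] by blast
  then have ev: "eventually (\<lambda>z. Dop (\<lambda>x. (f x, g x)) z = (eL o\<^sub>L Dop f z) + (eR o\<^sub>L Dop g z)) (nhds y)"
    unfolding eventually_nhds using \<rho> by (intro exI[of _ "ball y \<rho>"]) auto
  have c1: "isCont (\<lambda>z. eL o\<^sub>L Dop f z) y"
    using bounded_bilinear.isCont[OF bounded_bilinear_blinfun_compose continuous_const r1(3)] .
  have c2: "isCont (\<lambda>z. eR o\<^sub>L Dop g z) y"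
    using bounded_bilinear.isCont[OF bounded_bilinear_blinfun_compose continuous_const r2(3)] .
  have "isCont (\<lambda>z. (eL o\<^sub>L Dop f z) + (eR o\<^sub>L Dop g z)) y" using isCont_add[OF c1 c2] .
  then have "isCont (Dop (\<lambda>x. (f x, g x))) y" using isCont_cong[OF ev] by blast
  then show ?thesis using Reg1 \<rho> diff by auto
qed

lemma C11_Fq: "C11 UNIV (Fq :: (('n::finite) state)^('m::{finite,linorder}) \<Rightarrow> real^'n^('m::{finite,linorder}))"
proof (rule C11_vec[OF open_UNIV])
  fix i :: 'm
  have "C11 UNIV (\<lambda>M::('n state)^('m::{finite,linorder}). snd (M $ i))"
    by (rule C11_comp[OF C11_bl[OF open_UNIV bounded_linear_snd] C11_nth[OF C11_id[OF open_UNIV]]]) simp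
  then show "C11 UNIV (\<lambda>M::('n state)^('m::{finite,linorder}). Fq M $ i)" by (simp add: Fq_def)
qed

lemma C11_Psi: "C11 (UNIV \<times> {N. invertible N})
   (\<lambda>p::((('n::finite) state)^('m::{finite,linorder})) \<times> (real^'n^'n). Fq (fst p) ** matrix_inv (snd p))"
proof -
  let ?S = "UNIV \<times> {N::real^'n^'n. invertible N}"
  have S: "open (?S :: ((('n state)^('m::{finite,linorder})) \<times> (real^'n^'n)) set)" by (intro open_Times open_UNIV open_invertible)
  have a: "C11 ?S (\<lambda>p::(('n state)^('m::{finite,linorder})) \<times> (real^'n^'n). Fq (fst p))"
    by (rule C11_comp[OF C11_Fq C11_bl[OF S bounded_linear_fst]]) simp
  have b: "C11 ?S (\<lambda>p::(('n state)^('m::{finite,linorder})) \<times> (real^'n^'n). matrix_inv (snd p))"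
    by (rule C11_comp[OF C11_matrix_inv C11_bl[OF S bounded_linear_snd]]) auto
  show ?thesis using C11_matmul[OF a b] .
qed

lemma reg_J:
  assumes ks: "kinematic_system ms F R r" and rs: "reg_system b F R r"
  shows "reg_at b (Jmat F R) y"
proof -
  have F: "reg_at b F y" and R: "reg_at b R y" using rs unfolding reg_system_def reg_on_def by blast+
  have "\<forall>x. invertible (R x)" using ks unfolding kinematic_system_def by blast
  then have inv: "invertible (R y)" by blast
  have "reg_at b (\<lambda>x. Fq (fst (F x, R x)) ** matrix_inv (snd (F x, R x))) y"
    by (rule reg_at_comp[OF C11_Psi reg_at_pair[OF F R]]) (simp add: inv)
  then show ?thesis by (simp add: Jmat_def[abs_def])
qed


definition hatf :: "('a::real_inner) list \<Rightarrow> 'a \<Rightarrow> 'a" where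
  "hatf hs j = (let v = j - (\<Sum>h\<leftarrow>filter (\<lambda>h. h \<noteq> 0) hs. (h \<bullet> j) *\<^sub>R h)
      in if norm v > 0 then (1 / norm v) *\<^sub>R v else 0)"

lemma gs_hats_snoc: "gs_hats (js @ [j]) = gs_hats js @ [hatf (gs_hats js) j]"
  by (simp add: gs_hats_def hatf_def)

lemma gs_hats_Nil: "gs_hats [] = []"
  by (simp add: gs_hats_def)

lemma length_gs_hats: "length (gs_hats js) = length js"
  by (induction js rule: rev_induct) (simp_all add: gs_hats_snoc gs_hats_Nil)

lemma take_gs_hats: "take p (gs_hats js) = gs_hats (take p js)"
proof (induction js rule: rev_induct)
  case Nil then show ?case by (simp add: gs_hats_Nil)
next
  case (snoc x xs)
  show ?case
  proof (cases "p \<le> length xs")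
    case True
    then show ?thesis using snoc by (simp add: gs_hats_snoc length_gs_hats)
  next
    case False
    then show ?thesis by (simp add: gs_hats_snoc length_gs_hats)
  qed
qed

lemma nth_gs_hats: "p < length js \<Longrightarrow> gs_hats js ! p = hatf (take p (gs_hats js)) (js ! p)"
proof -
  assume p: "p < length js"
  have "gs_hats js ! p = take (Suc p) (gs_hats js) ! p" by simp
  also have "\<dots> = gs_hats (take p js @ [js ! p]) ! p"
    by (simp only: take_gs_hats take_Suc_conv_app_nth[OF p])
  also have "\<dots> = hatf (gs_hats (take p js)) (js ! p)"
    using p by (simp add: gs_hats_snoc nth_append length_gs_hats)
  finally show ?thesis by (simp add: take_gs_hats)
qed

lemma sum_list_filter_take:
  "p \<le> length xs \<Longrightarrow> sum_list (map f (filter P (take p xs))) = (\<Sum>q\<in>{q. q < p \<and> P (xs ! q)}. f (xs ! q))"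
proof (induction p)
  case 0 then show ?case by simp
next
  case (Suc p)
  have p: "p < length xs" using Suc.prems by simp
  have IH: "sum_list (map f (filter P (take p xs))) = (\<Sum>q\<in>{q. q < p \<and> P (xs ! q)}. f (xs ! q))"
    using Suc by simp
  show ?case
  proof (cases "P (xs ! p)")
    case True
    have "{q. q < Suc p \<and> P (xs ! q)} = insert p {q. q < p \<and> P (xs ! q)}" using True by auto
    then show ?thesis using True IH by (simp add: take_Suc_conv_app_nth[OF p] add.commute)
  next
    case False
    have "{q. q < Suc p \<and> P (xs ! q)} = {q. q < p \<and> P (xs ! q)}" using False less_Suc_eq by auto
    then show ?thesis using False IH by (simp add: take_Suc_conv_app_nth[OF p])
  qed
qed

abbreviation srt :: "'m::{finite,linorder} list" where
  "srt \<equiv> sorted_list_of_set (UNIV :: 'm set)"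

lemma srt_props:
  shows "sorted_wrt (<) (srt :: 'm::{finite,linorder} list)" "set (srt :: 'm list) = UNIV"
    "length (srt :: 'm list) = CARD('m)" "distinct (srt :: 'm list)"
  by (simp_all add: strict_sorted_list_of_set)

lemma row_pos_srt: "q < CARD('m::{finite,linorder}) \<Longrightarrow> row_pos ((srt :: 'm list) ! q) = q"
proof -
  assume q: "q < CARD('m)"
  let ?xs = "srt :: 'm list"
  have ss: "sorted_wrt (<) ?xs" and len: "length ?xs = CARD('m)" and d: "distinct ?xs" and st: "set ?xs = UNIV"
    using srt_props by auto
  have srt: "sorted ?xs" using ss strict_sorted_iff by blast
  have "{k. k < ?xs ! q} = (\<lambda>p. ?xs ! p) ` {..<q}"
  proof
    show "{k. k < ?xs ! q} \<subseteq> (\<lambda>p. ?xs ! p) ` {..<q}"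
    proof
      fix k assume k: "k \<in> {k. k < ?xs ! q}"
      have "k \<in> set ?xs" using st by simp
      then obtain p where p: "p < length ?xs" "?xs ! p = k" by (meson in_set_conv_nth)
      have "p < q"
      proof (rule ccontr)
        assume "\<not> p < q"
        then have "?xs ! q \<le> ?xs ! p" using sorted_nth_mono[OF srt _ p(1)] by simp
        then show False using k p(2) by simp
      qed
      then show "k \<in> (\<lambda>p. ?xs ! p) ` {..<q}" using p by auto
    qed
    show "(\<lambda>p. ?xs ! p) ` {..<q} \<subseteq> {k. k < ?xs ! q}"
      using sorted_wrt_nth_less[OF ss] q len by auto
  qed
  moreover have "inj_on (\<lambda>p. ?xs ! p) {..<q}"
    using d q len by (auto simp: inj_on_def nth_eq_iff_index_eq)
  ultimately show ?thesis unfolding row_pos_def by (simp add: card_image)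
qed

lemma row_pos_less: "row_pos (i::'m::{finite,linorder}) < CARD('m)"
  and srt_row_pos: "(srt :: 'm list) ! row_pos i = i"
proof -
  have "i \<in> set (srt :: 'm list)" using srt_props by simp
  then obtain q where q: "q < length (srt :: 'm list)" "(srt :: 'm list) ! q = i" by (meson in_set_conv_nth)
  have qc: "q < CARD('m)" using q srt_props by simp
  have "row_pos i = q" using row_pos_srt[OF qc] q by simp
  then show "row_pos i < CARD('m)" "(srt :: 'm list) ! row_pos i = i" using qc q by auto
qed

lemma row_pos_mono: "(k::'m::{finite,linorder}) < i \<longleftrightarrow> row_pos k < row_pos i"
proof -
  have ss: "sorted_wrt (<) (srt :: 'm list)" and len: "length (srt :: 'm list) = CARD('m)" using srt_props by auto
  have srt: "sorted (srt :: 'm list)" using ss strict_sorted_iff by blast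
  show ?thesis
  proof
    assume "k < i"
    show "row_pos k < row_pos i"
    proof (rule ccontr)
      assume "\<not> row_pos k < row_pos i"
      then have "(srt :: 'm list) ! row_pos i \<le> (srt :: 'm list) ! row_pos k"
        using sorted_nth_mono[OF srt _ ] row_pos_less[of k] len by simp
      then show False using \<open>k < i\<close> by (simp add: srt_row_pos)
    qed
  next
    assume "row_pos k < row_pos i"
    then have "(srt :: 'm list) ! row_pos k < (srt :: 'm list) ! row_pos i"
      using sorted_wrt_nth_less[OF ss] row_pos_less[of i] len by simp
    then show "k < i" by (simp add: srt_row_pos)
  qed
qed

lemma row_pos_inj: "inj (row_pos :: 'm::{finite,linorder} \<Rightarrow> nat)"
  by (metis injI srt_row_pos)

lemma gs_hat_eq:
  fixes M :: "real^'n::finite^('m::{finite,linorder})" and i :: 'm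
  shows "gs_hat M i = (if gs_v M i \<noteq> 0 then inverse (norm (gs_v M i)) *\<^sub>R gs_v M i else 0)"
proof -
  let ?H = "gs_hats (rows M)"
  let ?p = "row_pos i"
  have lr: "length (rows M) = CARD('m)" by (simp add: rows_def srt_props)
  have p: "?p < length (rows M)" using row_pos_less lr by simp
  have rp: "rows M ! ?p = M $ i" using p lr by (simp add: rows_def srt_row_pos)
  have lH: "length ?H = CARD('m)" using lr by (simp add: length_gs_hats)
  have "sum_list (map (\<lambda>h. (h \<bullet> M $ i) *\<^sub>R h) (filter (\<lambda>h. h \<noteq> 0) (take ?p ?H)))
        = (\<Sum>q\<in>{q. q < ?p \<and> ?H ! q \<noteq> 0}. (?H ! q \<bullet> M $ i) *\<^sub>R ?H ! q)"
    by (rule sum_list_filter_take) (use p lr lH in simp)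
  also have "\<dots> = (\<Sum>k\<in>{k. k < i \<and> gs_hat M k \<noteq> 0}. (gs_hat M k \<bullet> M $ i) *\<^sub>R gs_hat M k)"
  proof -
    have img: "{q. q < ?p \<and> ?H ! q \<noteq> 0} = row_pos ` {k. k < i \<and> gs_hat M k \<noteq> 0}"
    proof
      show "{q. q < ?p \<and> ?H ! q \<noteq> 0} \<subseteq> row_pos ` {k. k < i \<and> gs_hat M k \<noteq> 0}"
      proof
        fix q assume q: "q \<in> {q. q < ?p \<and> ?H ! q \<noteq> 0}"
        have qc: "q < CARD('m)" using q row_pos_less[of i] by simp
        let ?k = "(srt :: 'm list) ! q"
        have rk: "row_pos ?k = q" using row_pos_srt[OF qc] .
        have "row_pos ?k < row_pos i" using q rk by simp
        then have "?k < i" using row_pos_mono by blast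
        moreover have "gs_hat M ?k \<noteq> 0" using q rk by (simp add: gs_hat_def)
        ultimately show "q \<in> row_pos ` {k. k < i \<and> gs_hat M k \<noteq> 0}" using rk by force
      qed
      show "row_pos ` {k. k < i \<and> gs_hat M k \<noteq> 0} \<subseteq> {q. q < ?p \<and> ?H ! q \<noteq> 0}"
        using row_pos_mono by (auto simp: gs_hat_def)
    qed
    show ?thesis unfolding img
      by (subst sum.reindex) (auto simp: gs_hat_def inj_on_def row_pos_inj[THEN injD])
  qed
  finally have sv: "M $ i - sum_list (map (\<lambda>h. (h \<bullet> M $ i) *\<^sub>R h) (filter (\<lambda>h. h \<noteq> 0) (take ?p ?H))) = gs_v M i"
    by (simp add: gs_v_def)
  have "gs_hat M i = hatf (take ?p ?H) (M $ i)"
    unfolding gs_hat_def using nth_gs_hats[OF p] rp by simp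
  also have "\<dots> = (if gs_v M i \<noteq> 0 then inverse (norm (gs_v M i)) *\<^sub>R gs_v M i else 0)"
    unfolding hatf_def Let_def sv by (simp add: divide_inverse)
  finally show ?thesis .
qed

lemma gs_cv: "gs_c M a a *\<^sub>R gs_hat M a = gs_v M a"
  by (simp add: gs_c_def gs_hat_eq)


definition Wset :: "'m::{finite,linorder} \<Rightarrow> (real^'n::finite^('m::{finite,linorder})) set" where
  "Wset i = {M. \<forall>k<i. gs_v M k \<noteq> 0}"

definition Oset :: "'m::{finite,linorder} \<Rightarrow> (real^'n::finite^('m::{finite,linorder})) set" where
  "Oset k = Wset k \<inter> (\<lambda>M. gs_v M k) -` (- {0})"

lemma hat_nz: "gs_v M k \<noteq> 0 \<Longrightarrow> gs_hat M k = inverse (norm (gs_v M k)) *\<^sub>R gs_v M k"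
  by (simp add: gs_hat_eq)

lemma hat_nz2: "gs_v M k \<noteq> 0 \<Longrightarrow> gs_hat M k \<noteq> 0"
  by (simp add: gs_hat_eq)

lemma Wset_eq: "Wset i = (\<Inter>k\<in>{k. k < i}. Oset k)"
  unfolding Wset_def Oset_def by (auto dest: less_trans)

lemma gs_v_alt: "M \<in> Wset i \<Longrightarrow> gs_v M i = M $ i - (\<Sum>k\<in>{k. k < i}. (gs_hat M k \<bullet> M $ i) *\<^sub>R gs_hat M k)"
proof -
  assume "M \<in> Wset i"
  then have "{k. k < i \<and> gs_hat M k \<noteq> 0} = {k. k < i}" unfolding Wset_def using hat_nz2 by blast
  then show ?thesis by (simp add: gs_v_def)
qed

lemma gs_smooth:
  fixes i :: "'m::{finite,linorder}"
  shows "open (Wset i :: (real^'n::finite^('m::{finite,linorder})) set) \<and> C11 (Wset i :: (real^'n^('m::{finite,linorder})) set) (\<lambda>M. gs_v M i)"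
proof (induction "row_pos i" arbitrary: i rule: less_induct)
  case less
  have IH: "open (Wset k :: (real^'n^('m::{finite,linorder})) set) \<and> C11 (Wset k :: (real^'n^('m::{finite,linorder})) set) (\<lambda>M. gs_v M k)" if "k < i" for k
    using less row_pos_mono that by blast
  have Oo: "open (Oset k :: (real^'n^('m::{finite,linorder})) set)" if "k < i" for k
    unfolding Oset_def
    by (rule continuous_open_preimage[OF C11_cont]) (use IH[OF that] in auto)
  have Wo: "open (Wset i :: (real^'n^('m::{finite,linorder})) set)"
    unfolding Wset_eq by (rule open_INT) (use Oo in auto)
  have hat: "C11 (Wset i :: (real^'n^('m::{finite,linorder})) set) (\<lambda>M. gs_hat M k)" if k: "k < i" for k
  proof -
    have sub: "(Wset i :: (real^'n^('m::{finite,linorder})) set) \<subseteq> Wset k" unfolding Wset_def using k by (auto dest: less_trans)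
    have v: "C11 (Wset i :: (real^'n^('m::{finite,linorder})) set) (\<lambda>M. gs_v M k)"
      by (rule C11_subset[OF conjunct2[OF IH[OF k]] Wo sub])
    have nz: "\<And>M. M \<in> Wset i \<Longrightarrow> gs_v M k \<noteq> 0" unfolding Wset_def using k by blast
    have "C11 (Wset i :: (real^'n^('m::{finite,linorder})) set) (\<lambda>M. inverse (norm (gs_v M k)) *\<^sub>R gs_v M k)"
      by (rule C11_comp[OF C11_normalize v]) (use nz in auto)
    then show ?thesis by (rule C11_cong) (simp add: hat_nz nz)
  qed
  have row: "C11 (Wset i :: (real^'n^('m::{finite,linorder})) set) (\<lambda>M. M $ i)" by (rule C11_nth[OF C11_id[OF Wo]])
  have "C11 (Wset i :: (real^'n^('m::{finite,linorder})) set) (\<lambda>M. M $ i - (\<Sum>k\<in>{k. k < i}. (gs_hat M k \<bullet> M $ i) *\<^sub>R gs_hat M k))"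
  proof (rule C11_diff[OF row], rule C11_sum[OF Wo])
    fix k assume "k \<in> {k. k < i}"
    then have h: "C11 (Wset i :: (real^'n^('m::{finite,linorder})) set) (\<lambda>M. gs_hat M k)" using hat by simp
    show "C11 (Wset i :: (real^'n^('m::{finite,linorder})) set) (\<lambda>M. (gs_hat M k \<bullet> M $ i) *\<^sub>R gs_hat M k)"
      by (rule C11_scaleR[OF C11_inner[OF h row] h])
  qed
  then have "C11 (Wset i :: (real^'n^('m::{finite,linorder})) set) (\<lambda>M. gs_v M i)" by (rule C11_cong) (simp add: gs_v_alt)
  then show ?case using Wo by simp
qed

definition Wall :: "(real^'n::finite^('m::{finite,linorder})) set" where
  "Wall = {M. \<forall>k. gs_v M k \<noteq> 0}"

lemma Wall_open: "open (Wall :: (real^'n::finite^('m::{finite,linorder})) set)"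
proof -
  have "(Wall :: (real^'n^('m::{finite,linorder})) set) = (\<Inter>k\<in>UNIV. Oset k)"
    unfolding Wall_def Oset_def Wset_def by auto
  moreover have "open (Oset k :: (real^'n^('m::{finite,linorder})) set)" for k
    unfolding Oset_def
    by (rule continuous_open_preimage[OF C11_cont]) (use gs_smooth[of k] in auto)
  then have "open (\<Inter>k\<in>UNIV. Oset k :: (real^'n^('m::{finite,linorder})) set)" by (intro open_INT) auto
  ultimately show ?thesis by simp
qed

lemma Wall_sub: "(Wall :: (real^'n::finite^('m::{finite,linorder})) set) \<subseteq> Wset k"
  unfolding Wall_def Wset_def by auto

lemma C11_v_Wall: "C11 (Wall :: (real^'n::finite^('m::{finite,linorder})) set) (\<lambda>M. gs_v M k)"
  by (rule C11_subset[OF conjunct2[OF gs_smooth] Wall_open Wall_sub])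

lemma C11_hat_Wall: "C11 (Wall :: (real^'n::finite^('m::{finite,linorder})) set) (\<lambda>M. gs_hat M k)"
proof -
  have nz: "\<And>M. M \<in> Wall \<Longrightarrow> gs_v M k \<noteq> 0" unfolding Wall_def by blast
  have "C11 (Wall :: (real^'n^('m::{finite,linorder})) set) (\<lambda>M. inverse (norm (gs_v M k)) *\<^sub>R gs_v M k)"
    by (rule C11_comp[OF C11_normalize C11_v_Wall]) (use nz in auto)
  then show ?thesis by (rule C11_cong) (simp add: hat_nz nz)
qed

lemma C11_c_Wall: "C11 (Wall :: (real^'n::finite^('m::{finite,linorder})) set) (\<lambda>M. gs_c M i k)"
proof -
  have nz: "\<And>M k. M \<in> Wall \<Longrightarrow> gs_v M k \<noteq> 0" unfolding Wall_def by blast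
  show ?thesis
  proof (cases "k = i")
    case True
    have "C11 (Wall :: (real^'n^('m::{finite,linorder})) set) (\<lambda>M. norm (gs_v M i))"
      by (rule C11_comp[OF C11_norm C11_v_Wall]) (use nz in auto)
    then show ?thesis by (rule C11_cong) (simp add: gs_c_def True)
  next
    case False
    show ?thesis
    proof (cases "k < i")
      case True
      have "C11 (Wall :: (real^'n^('m::{finite,linorder})) set) (\<lambda>M. gs_hat M k \<bullet> M $ i)"
        by (rule C11_inner[OF C11_hat_Wall C11_nth[OF C11_id[OF Wall_open]]])
      then show ?thesis by (rule C11_cong) (simp add: gs_c_def True False nz)
    next
      case F2: False
      have "C11 (Wall :: (real^'n^('m::{finite,linorder})) set) (\<lambda>M. 0::real)" by (rule C11_const[OF Wall_open])
      then show ?thesis by (rule C11_cong) (simp add: gs_c_def False F2)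
    qed
  qed
qed

lemma C11_block_Wall: "C11 (Wall :: (real^'n::finite^('m::{finite,linorder})) set) (\<lambda>M. block_mat ms M a)"
proof (rule C11_vec[OF Wall_open])
  fix i :: 'm
  show "C11 (Wall :: (real^'n^('m::{finite,linorder})) set) (\<lambda>M. block_mat ms M a $ i)"
  proof (cases "i \<in> task_block ms a")
    case True
    have "C11 (Wall :: (real^'n^('m::{finite,linorder})) set) (\<lambda>M. \<Sum>k\<in>task_block ms a. gs_c M i k *\<^sub>R gs_hat M k)"
      by (rule C11_sum[OF Wall_open], rule C11_scaleR[OF C11_c_Wall C11_hat_Wall])
    then show ?thesis by (rule C11_cong) (simp add: block_mat_def True)
  next
    case False
    have "C11 (Wall :: (real^'n^('m::{finite,linorder})) set) (\<lambda>M. 0::real^'n)" by (rule C11_const[OF Wall_open])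
    then show ?thesis by (rule C11_cong) (simp add: block_mat_def False)
  qed
qed


theorem lemma15:
  fixes b :: regclass and ms :: "nat list"
    and F :: "('n::finite) state \<Rightarrow> ('n state)^('m::{finite,linorder})"
    and R :: "'n state \<Rightarrow> real^'n^'n" and r :: "'n state \<Rightarrow> real^('m::{finite,linorder})"
    and x0 :: "'n state"
  assumes "kinematic_system ms F R r"
    and "reg_system b F R r"
    and "x0 \<notin> interior (G_set b ms F R)"
    and "reg_at Reg1 (Jmat F R) x0"
    and "reg_at RegLp (Dop (Jmat F R)) x0"
  shows "\<exists>(a::'m::{finite,linorder}) (\<rho>::real) (L::real). \<rho> > 0 \<and> L > 0 \<and>
     gs_c (Jmat F R x0) a a = 0 \<and>
     reg_on Reg1p (\<lambda>y. gs_c (Jmat F R y) a a *\<^sub>R gs_hat (Jmat F R y) a) (cball x0 \<rho>) \<and>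
     (\<forall>x\<in>cball x0 \<rho>.
        norm (gs_c (Jmat F R x) a a *\<^sub>R gs_hat (Jmat F R x) a
              - Dop (\<lambda>y. gs_c (Jmat F R y) a a *\<^sub>R gs_hat (Jmat F R y) a) x0 (x - x0))
        \<le> L * (norm (x - x0))\<^sup>2)"
proof -
  note ks = assms(1) and rs = assms(2) and notint = assms(3) and h4 = assms(4) and h5 = assms(5)
  define J where "J = Jmat F R"
  have regJ: "\<And>y. reg_at b J y" unfolding J_def using reg_J[OF ks rs] .
  obtain r4 where r4: "r4 > 0" "\<And>x. x \<in> ball x0 r4 \<Longrightarrow> J differentiable (at x)" "isCont (Dop J) x0"
    using h4 unfolding J_def by auto
  have Jc: "isCont J x0" using reg_at_isCont[OF h4] unfolding J_def .
  obtain r5 L5 where r5: "r5 > 0" "L5 \<ge> 0" "\<And>x. norm (x - x0) \<le> r5 \<Longrightarrow> norm (Dop J x - Dop J x0) \<le> L5 * norm (x - x0)"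
    using h5 unfolding J_def by auto
  have ex0: "\<exists>a. gs_v (J x0) a = 0"
  proof (rule ccontr)
    assume "\<not> (\<exists>a. gs_v (J x0) a = 0)"
    then have JW: "J x0 \<in> Wall" unfolding Wall_def by blast
    obtain e where e: "e > 0" "ball (J x0) e \<subseteq> Wall" using Wall_open JW open_contains_ball by blast
    obtain d where d: "d > 0" "\<And>x. dist x x0 < d \<Longrightarrow> J x \<in> ball (J x0) e"
      using isCont_near[OF Jc e(1)] by blast
    have "ball x0 d \<subseteq> G_set b ms F R"
    proof
      fix y assume y: "y \<in> ball x0 d"
      have Jy: "J y \<in> Wall" using d(2)[of y] y e(2) by (auto simp: dist_commute)
      have "reg_at b (\<lambda>z. block_mat ms (J z) a) y" for a
        by (rule reg_at_comp[OF C11_block_Wall regJ Jy])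
      then show "y \<in> G_set b ms F R" unfolding G_set_def J_def by simp
    qed
    then have "x0 \<in> interior (G_set b ms F R)" using d(1) by (meson centre_in_ball interior_maximal open_ball subsetD)
    then show False using notint by simp
  qed
  define a where "a = Min {a. gs_v (J x0) a = 0}"
  have "a \<in> {a. gs_v (J x0) a = 0}" unfolding a_def by (rule Min_in) (use ex0 in auto)
  then have a0: "gs_v (J x0) a = 0" by simp
  have amin: "\<And>k. k < a \<Longrightarrow> gs_v (J x0) k \<noteq> 0" unfolding a_def using ex0
    by (metis (mono_tags, lifting) Min_le finite mem_Collect_eq not_le)
  define WA where "WA = (Wset a :: (real^'n^('m::{finite,linorder})) set)"
  have JWa: "J x0 \<in> WA" unfolding WA_def Wset_def using amin by blast
  have CP: "C11 WA (\<lambda>M. gs_v M a)" unfolding WA_def using gs_smooth by blast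
  obtain D where D: "\<And>M. M \<in> WA \<Longrightarrow> ((\<lambda>M. gs_v M a) has_derivative blinfun_apply (D M)) (at M)" "LL WA D"
    using C11_D[OF CP] by blast
  obtain r1 L1 where r1: "r1 > 0" "ball (J x0) r1 \<subseteq> WA" "L1-lipschitz_on (ball (J x0) r1) D"
    using LL_local[OF D(2) JWa] by blast
  have L1: "L1 \<ge> 0" using lipschitz_on_nonneg[OF r1(3)] .
  obtain d where d: "d > 0" "\<And>x. dist x x0 < d \<Longrightarrow> J x \<in> ball (J x0) r1"
    using isCont_near[OF Jc r1(1)] by blast
  define \<rho> where "\<rho> = min r4 (min r5 d) / 2"
  have \<rho>: "\<rho> > 0" using r4 r5 d by (simp add: \<rho>_def)
  have inb: "z \<in> ball x0 r4" "norm (z - x0) \<le> r5" "J z \<in> ball (J x0) r1" if z: "z \<in> cball x0 \<rho>" for z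
  proof -
    have dz: "dist x0 z \<le> \<rho>" using z by simp
    show "z \<in> ball x0 r4" using dz \<rho> by (simp add: \<rho>_def)
    show "norm (z - x0) \<le> r5" using dz \<rho> by (simp add: \<rho>_def dist_norm norm_minus_commute)
    show "J z \<in> ball (J x0) r1" using dz \<rho> d(2)[of z] by (simp add: \<rho>_def dist_commute)
  qed
  define f where "f = (\<lambda>y. gs_v (J y) a)"
  define Df where "Df = (\<lambda>z. D (J z) o\<^sub>L Dop J z)"
  have fder: "(f has_derivative blinfun_apply (Df z)) (at z)" if z: "z \<in> cball x0 \<rho>" for z
  proof -
    have dz: "J differentiable (at z)" using r4(2) inb(1)[OF z] .
    have Jz: "J z \<in> WA" using inb(3)[OF z] r1(2) by blast
    show ?thesis using diff_chain_at[OF Dop_works[OF dz] D(1)[OF Jz]]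
      by (simp add: o_def blinfun_compose.rep_eq f_def Df_def)
  qed
  have x0c: "x0 \<in> cball x0 \<rho>" using \<rho> by simp
  have fx0: "f x0 = 0" using a0 by (simp add: f_def)
  have Dopf: "Dop f x0 = Df x0" by (rule Dop_eq[OF fder[OF x0c]])
  define BJ where "BJ = norm (Dop J x0) + L5 * \<rho>"
  have BJ0: "BJ \<ge> 0" using r5 \<rho> by (simp add: BJ_def)
  have bDJ: "norm (Dop J z) \<le> BJ" if z: "z \<in> cball x0 \<rho>" for z
  proof -
    have "norm (Dop J z - Dop J x0) \<le> L5 * norm (z - x0)" using r5(3) inb(2)[OF z] .
    also have "\<dots> \<le> L5 * \<rho>" using z r5(2) by (intro mult_left_mono) (auto simp: dist_norm norm_minus_commute)
    finally show ?thesis unfolding BJ_def using norm_triangle_ineq2[of "Dop J z" "Dop J x0"] by simp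
  qed
  have Jlip: "norm (J z - J x0) \<le> BJ * norm (z - x0)" if z: "z \<in> cball x0 \<rho>" for z
  proof (rule differentiable_bound[of "cball x0 \<rho>" J "\<lambda>y. blinfun_apply (Dop J y)"])
    show "convex (cball x0 \<rho>)" by simp
    show "(J has_derivative blinfun_apply (Dop J u)) (at u within cball x0 \<rho>)" if "u \<in> cball x0 \<rho>" for u
      using Dop_works[OF r4(2)[OF inb(1)[OF that]]] has_derivative_at_withinI by blast
    show "onorm (blinfun_apply (Dop J u)) \<le> BJ" if "u \<in> cball x0 \<rho>" for u
      using bDJ[OF that] by (simp add: norm_blinfun.rep_eq)
  qed (use z x0c in auto)
  define K where "K = L1 * BJ * BJ + norm (D (J x0)) * L5"
  have K0: "K \<ge> 0" using L1 BJ0 r5(2) by (simp add: K_def)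
  have bDf: "norm (Df z - Df x0) \<le> K * norm (z - x0)" if z: "z \<in> cball x0 \<rho>" for z
  proof -
    have eq: "Df z - Df x0 = ((D (J z) - D (J x0)) o\<^sub>L Dop J z) + (D (J x0) o\<^sub>L (Dop J z - Dop J x0))"
      unfolding Df_def
      by (simp add: bounded_bilinear.diff_left[OF bounded_bilinear_blinfun_compose]
                    bounded_bilinear.diff_right[OF bounded_bilinear_blinfun_compose])
    have jb: "J z \<in> ball (J x0) r1" using inb(3)[OF z] .
    have j0: "J x0 \<in> ball (J x0) r1" using r1(1) by simp
    have A: "norm (D (J z) - D (J x0)) \<le> L1 * (BJ * norm (z - x0))"
    proof -
      have "norm (D (J z) - D (J x0)) \<le> L1 * norm (J z - J x0)"
        using lipschitz_onD[OF r1(3) jb j0] by (simp add: dist_norm)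
      also have "\<dots> \<le> L1 * (BJ * norm (z - x0))" using Jlip[OF z] L1 by (rule mult_left_mono)
      finally show ?thesis .
    qed
    have "norm (Df z - Df x0) \<le> norm ((D (J z) - D (J x0)) o\<^sub>L Dop J z) + norm (D (J x0) o\<^sub>L (Dop J z - Dop J x0))"
      unfolding eq by (rule norm_triangle_ineq)
    also have "\<dots> \<le> norm (D (J z) - D (J x0)) * norm (Dop J z) + norm (D (J x0)) * norm (Dop J z - Dop J x0)"
      by (intro add_mono norm_blinfun_compose)
    also have "\<dots> \<le> (L1 * (BJ * norm (z - x0))) * BJ + norm (D (J x0)) * (L5 * norm (z - x0))"
      using A bDJ[OF z] r5(3)[OF inb(2)[OF z]]
      by (intro add_mono mult_mono) (auto simp: L1 BJ0 r5(2))
    also have "\<dots> = K * norm (z - x0)" by (simp add: K_def algebra_simps)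
    finally show ?thesis .
  qed
  have quad: "norm (f x - Dop f x0 (x - x0)) \<le> K * (norm (x - x0))\<^sup>2" if x: "x \<in> cball x0 \<rho>" for x
  proof -
    let ?S = "cball x0 (norm (x - x0))"
    have Ssub: "?S \<subseteq> cball x0 \<rho>" using x by (auto simp: dist_norm norm_minus_commute)
    have "norm (f x - f x0 - blinfun_apply (Df x0) (x - x0)) \<le> norm (x - x0) * (K * norm (x - x0))"
    proof (rule differentiable_bound_linearization[of x0 x ?S f "\<lambda>z. blinfun_apply (Df z)" x0])
      show "x0 + t *\<^sub>R (x - x0) \<in> ?S" if "t \<in> {0..1}" for t
        using that by (auto simp: dist_norm mult_left_le_one_le)
      show "(f has_derivative blinfun_apply (Df u)) (at u within ?S)" if "u \<in> ?S" for u
        using fder[of u] that Ssub has_derivative_at_withinI by blast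
      show "onorm (blinfun_apply (Df u) - blinfun_apply (Df x0)) \<le> K * norm (x - x0)" if u: "u \<in> ?S" for u
      proof -
        have "onorm (blinfun_apply (Df u) - blinfun_apply (Df x0)) = norm (Df u - Df x0)"
          by (simp add: norm_blinfun.rep_eq minus_blinfun.rep_eq fun_diff_def)
        also have "\<dots> \<le> K * norm (u - x0)" using bDf[of u] u Ssub by blast
        also have "\<dots> \<le> K * norm (x - x0)" using u K0 by (intro mult_left_mono) (auto simp: dist_norm norm_minus_commute)
        finally show ?thesis .
      qed
      show "x0 \<in> ?S" by simp
    qed
    then show ?thesis by (simp add: fx0 Dopf power2_eq_square mult.assoc mult.left_commute)
  qed
  have feq: "(\<lambda>y. gs_c (Jmat F R y) a a *\<^sub>R gs_hat (Jmat F R y) a) = f"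
    by (simp add: gs_cv f_def J_def)
  show ?thesis
  proof (intro exI conjI)
    show "\<rho> > 0" by (rule \<rho>)
    show "K + 1 > 0" using K0 by simp
    show "gs_c (Jmat F R x0) a a = 0" using a0 by (simp add: gs_c_def J_def)
    show "reg_on Reg1p (\<lambda>y. gs_c (Jmat F R y) a a *\<^sub>R gs_hat (Jmat F R y) a) (cball x0 \<rho>)"
      unfolding feq reg_on_def reg_at.simps differentiable_def using fder by blast
    show "\<forall>x\<in>cball x0 \<rho>. norm (gs_c (Jmat F R x) a a *\<^sub>R gs_hat (Jmat F R x) a
              - Dop (\<lambda>y. gs_c (Jmat F R y) a a *\<^sub>R gs_hat (Jmat F R y) a) x0 (x - x0))
        \<le> (K + 1) * (norm (x - x0))\<^sup>2"
    proof
      fix x assume x: "x \<in> cball x0 \<rho>"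
      have "gs_c (Jmat F R x) a a *\<^sub>R gs_hat (Jmat F R x) a = f x" using feq by metis
      then have "norm (gs_c (Jmat F R x) a a *\<^sub>R gs_hat (Jmat F R x) a
              - Dop (\<lambda>y. gs_c (Jmat F R y) a a *\<^sub>R gs_hat (Jmat F R y) a) x0 (x - x0))
            = norm (f x - Dop f x0 (x - x0))" unfolding feq by simp
      also have "\<dots> \<le> K * (norm (x - x0))\<^sup>2" using quad[OF x] .
      also have "\<dots> \<le> (K + 1) * (norm (x - x0))\<^sup>2" by (simp add: mult_right_mono)
      finally show "norm (gs_c (Jmat F R x) a a *\<^sub>R gs_hat (Jmat F R x) a
              - Dop (\<lambda>y. gs_c (Jmat F R y) a a *\<^sub>R gs_hat (Jmat F R y) a) x0 (x - x0))
        \<le> (K + 1) * (norm (x - x0))\<^sup>2" .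
    qed
  qed
qed


end
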